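(* For integers $n\ge 1$ and $k\ge 1$, let $a_{n,k}(213)$ denote the number of cyclic permutations $\pi\in\mathfrak S_n$ whose one-line notation avoids $\delta_k=k(k-1)\cdots 21$ and whose cycle form $C(\pi)$ avoids $213$. Then for $n\geq 2$ and $k\geq 4$, \[a_{n,k}(213) = \sum_{i=1}^{n-1} a_{i,k}(213)\,a_{n-i,k-1}(213),\] with base cases: $a_{1,1}(213)=0$ and $a_{1,k}(213) = 1$ for $k \geq 2$; $a_{n,1}(213) = a_{n,2}(213) = 0$ for $n \geq 2$; and $a_{n,3}(213) = 2^{n-2}$ for $n \geq 2$.
   Context: A permutation $\pi\in\mathfrak S_n$ is cyclic if it consists of a single $n$-cycle. For a cyclic $\pi$, its cycle form is $C(\pi)=(1,c_2,\dots,c_n)$ with $c_2=\pi(1)$ and $c_{i+1}=\pi(c_i)$; it is regarded as the sequence $1c_2\cdots c_n$ for pattern purposes. A sequence of distinct integers avoids a pattern $\sigma\in\mathfrak S_m$ if it has no subsequence of length $m$ in the same relative order as $\sigma$. The one-line notation of $\pi$ is $\pi_1\pi_2\cdots\pi_n$ with $\pi_i=\pi(i)$. *)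

theory Defs
  imports "HOL-Combinatorics.Permutations"
begin

(* Permutations of [n] = {1..n} are functions nat => nat with  p permutes {1..n}. *)

definition one_line :: "nat \<Rightarrow> (nat \<Rightarrow> nat) \<Rightarrow> nat list" where
  "one_line n p = map p [1..<Suc n]"

definition cycle_form :: "nat \<Rightarrow> (nat \<Rightarrow> nat) \<Rightarrow> nat list" where
  "cycle_form n p = map (\<lambda>i. (p ^^ i) 1) [0..<n]"

definition cyclic_perm :: "nat \<Rightarrow> (nat \<Rightarrow> nat) \<Rightarrow> bool" where
  "cyclic_perm n p \<longleftrightarrow> p permutes {1..n} \<and> set (cycle_form n p) = {1..n}"

definition contains_pattern :: "nat list \<Rightarrow> nat list \<Rightarrow> bool" where
  "contains_pattern xs \<sigma> \<longleftrightarrow>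
     (\<exists>idx :: nat \<Rightarrow> nat.
        (\<forall>a b. a < b \<and> b < length \<sigma> \<longrightarrow> idx a < idx b) \<and>
        (\<forall>a < length \<sigma>. idx a < length xs) \<and>
        (\<forall>a < length \<sigma>. \<forall>b < length \<sigma>.
            (xs ! idx a < xs ! idx b) \<longleftrightarrow> (\<sigma> ! a < \<sigma> ! b)))"

definition avoids :: "nat list \<Rightarrow> nat list \<Rightarrow> bool" where
  "avoids xs \<sigma> \<longleftrightarrow> \<not> contains_pattern xs \<sigma>"

definition delta :: "nat \<Rightarrow> nat list" where
  "delta k = rev [1..<Suc k]"

definition a213 :: "nat \<Rightarrow> nat \<Rightarrow> nat" where
  "a213 n k = card {p. cyclic_perm n p \<and> avoids (one_line n p) (delta k)
                        \<and> avoids (cycle_form n p) [2,1,3]}"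

end

theory Submission
  imports Defs "HOL-Library.Sublist"
begin
definition ld :: "nat list \<Rightarrow> nat" where
  "ld xs = Max (length ` {ys. subseq ys xs \<and> sorted_wrt (>) ys})"

lemma subseq_set_sub: "subseq ys xs \<Longrightarrow> set ys \<subseteq> set xs"
  by (induct rule: list_emb.induct) auto

lemma ld_finite: "finite {ys. subseq ys xs \<and> sorted_wrt (>) ys}"
proof -
  have "{ys. subseq ys xs \<and> sorted_wrt (>) ys} \<subseteq> {ys. set ys \<subseteq> set xs \<and> length ys \<le> length xs}"
    by (auto dest: subseq_set_sub list_emb_length)
  moreover have "finite {ys. set ys \<subseteq> set xs \<and> length ys \<le> length xs}"
    by (rule finite_lists_length_le) simp
  ultimately show ?thesis by (rule finite_subset)
qed

lemma ld_ge:
  assumes "subseq ys xs" "sorted_wrt (>) ys"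
  shows "length ys \<le> ld xs"
proof -
  have "length ys \<in> length ` {ys. subseq ys xs \<and> sorted_wrt (>) ys}"
    using assms by blast
  then show ?thesis unfolding ld_def by (rule Max_ge[OF finite_imageI[OF ld_finite]])
qed

lemma ld_obtain:
  obtains ys where "subseq ys xs" "sorted_wrt (>) ys" "length ys = ld xs"
proof -
  have ne: "{ys. subseq ys xs \<and> sorted_wrt (>) ys} \<noteq> {}"
  proof -
    have "[] \<in> {ys. subseq ys xs \<and> sorted_wrt (>) ys}" by simp
    then show ?thesis by blast
  qed
  have "ld xs \<in> length ` {ys. subseq ys xs \<and> sorted_wrt (>) ys}" unfolding ld_def
    using ne by (intro Max_in[OF finite_imageI[OF ld_finite]]) blast
  then show ?thesis using that by auto
qed

lemma ld_le_iff: "ld xs \<le> k \<longleftrightarrow> (\<forall>ys. subseq ys xs \<and> sorted_wrt (>) ys \<longrightarrow> length ys \<le> k)"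
proof
  assume "ld xs \<le> k" then show "\<forall>ys. subseq ys xs \<and> sorted_wrt (>) ys \<longrightarrow> length ys \<le> k"
    using ld_ge le_trans by blast
next
  assume H: "\<forall>ys. subseq ys xs \<and> sorted_wrt (>) ys \<longrightarrow> length ys \<le> k"
  obtain ys where "subseq ys xs" "sorted_wrt (>) ys" "length ys = ld xs" by (rule ld_obtain)
  then show "ld xs \<le> k" using H by auto
qed

lemma ld_ge_iff: "k \<le> ld xs \<longleftrightarrow> (\<exists>ys. subseq ys xs \<and> sorted_wrt (>) ys \<and> k \<le> length ys)"
proof
  assume "k \<le> ld xs"
  moreover obtain ys where "subseq ys xs" "sorted_wrt (>) ys" "length ys = ld xs" by (rule ld_obtain)
  ultimately show "\<exists>ys. subseq ys xs \<and> sorted_wrt (>) ys \<and> k \<le> length ys" by auto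
next
  assume "\<exists>ys. subseq ys xs \<and> sorted_wrt (>) ys \<and> k \<le> length ys"
  then show "k \<le> ld xs" using ld_ge le_trans by blast
qed

lemma ld_Nil[simp]: "ld [] = 0"
proof -
  obtain ys :: "nat list" where "subseq ys []" "length ys = ld []" by (rule ld_obtain[of "[]"])
  then show ?thesis using list_emb_Nil2 by fastforce
qed

lemma ld_pos: "xs \<noteq> [] \<Longrightarrow> 1 \<le> ld xs"
  unfolding ld_ge_iff by (rule exI[of _ "[hd xs]"]) (auto simp: subseq_singleton_left)

lemma ld_single[simp]: "ld [x] = 1"
proof -
  have "ld [x] \<le> 1" unfolding ld_le_iff by (auto dest: list_emb_length)
  then show ?thesis using ld_pos[of "[x]"] by simp
qed

lemma ld_mono: "subseq us vs \<Longrightarrow> ld us \<le> ld vs"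
proof -
  assume that: "subseq us vs"
  obtain zs where zs: "subseq zs us" "sorted_wrt (>) zs" "length zs = ld us" by (rule ld_obtain)
  then have "subseq zs vs" using that subseq_order.order_trans by blast
  then show ?thesis using zs ld_ge by fastforce
qed

lemma ld_split:
  assumes "\<forall>y\<in>set ys. \<not> P y \<longrightarrow> (\<forall>x\<in>set xs. x < y)"
  shows "ld (xs @ ys) = max (ld ys) (ld (xs @ filter P ys))"
proof (rule antisym)
  show "ld (xs @ ys) \<le> max (ld ys) (ld (xs @ filter P ys))"
    unfolding ld_le_iff
  proof (intro allI impI)
    fix zs assume zs: "subseq zs (xs @ ys) \<and> sorted_wrt (>) zs"
    then obtain z1 z2 where z: "zs = z1 @ z2" "subseq z1 xs" "subseq z2 ys"
      by (auto elim: subseq_appendE)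
    show "length zs \<le> max (ld ys) (ld (xs @ filter P ys))"
    proof (cases "z1 = []")
      case True
      then have "length zs \<le> ld ys" using z zs by (intro ld_ge) auto
      then show ?thesis by simp
    next
      case False
      have "\<forall>y\<in>set z2. P y"
      proof
        fix y assume y: "y \<in> set z2"
        have "last z1 \<in> set z1" using False by simp
        then have lx: "last z1 \<in> set xs" using z(2) subseq_set_sub by blast
        have "y < last z1" using zs z y False
          by (auto simp: sorted_wrt_append)
        moreover have "y \<in> set ys" using y z(3) subseq_set_sub by blast
        ultimately show "P y" using assms lx by force
      qed
      then have "z2 = filter P z2" by simp
      then have "subseq z2 (filter P ys)" using z(3) by (metis subseq_filter)
      then have "subseq zs (xs @ filter P ys)" using z by (simp add: list_emb_append_mono)
      then have "length zs \<le> ld (xs @ filter P ys)" using zs by (intro ld_ge) auto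
      then show ?thesis by simp
    qed
  qed
next
  have mono: "ld us \<le> ld vs" if "subseq us vs" for us vs
  proof -
    obtain zs where zs: "subseq zs us" "sorted_wrt (>) zs" "length zs = ld us" by (rule ld_obtain)
    then have "subseq zs vs" using that subseq_order.order_trans by blast
    then show ?thesis using zs ld_ge by fastforce
  qed
  have a: "ld ys \<le> ld (xs @ ys)" by (rule mono) (rule subseq_drop_many, simp)
  have b: "ld (xs @ filter P ys) \<le> ld (xs @ ys)" by (rule mono) (simp add: subseq_append')
  show "max (ld ys) (ld (xs @ filter P ys)) \<le> ld (xs @ ys)" using a b by simp
qed

lemma ld_Cons_big:
  assumes "\<forall>y\<in>set ys. y < x"
  shows "ld (x # ys) = Suc (ld ys)"
proof (rule antisym)
  show "ld (x # ys) \<le> Suc (ld ys)"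
    unfolding ld_le_iff
  proof (intro allI impI)
    fix zs assume zs: "subseq zs (x # ys) \<and> sorted_wrt (>) zs"
    show "length zs \<le> Suc (ld ys)"
    proof (cases zs)
      case Nil then show ?thesis by simp
    next
      case (Cons z zs')
      then have "subseq zs' ys" using zs
        by (metis subseq_Cons' list_emb_ConsD subseq_Cons2_iff)
      then show ?thesis using zs Cons ld_ge[of zs' ys] by simp
    qed
  qed
next
  obtain zs where zs: "subseq zs ys" "sorted_wrt (>) zs" "length zs = ld ys" by (rule ld_obtain)
  have "subseq (x # zs) (x # ys)" using zs by simp
  moreover have "sorted_wrt (>) (x # zs)" using zs assms subseq_set_sub by fastforce
  ultimately show "Suc (ld ys) \<le> ld (x # ys)" using zs ld_ge by fastforce
qed

lemma ld_snoc_small: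
  assumes "\<forall>y\<in>set ys. x < y"
  shows "ld (ys @ [x]) = Suc (ld ys)"
proof (rule antisym)
  show "ld (ys @ [x]) \<le> Suc (ld ys)"
    unfolding ld_le_iff
  proof (intro allI impI)
    fix zs assume zs: "subseq zs (ys @ [x]) \<and> sorted_wrt (>) zs"
    then obtain z1 z2 where z: "zs = z1 @ z2" "subseq z1 ys" "subseq z2 [x]"
      by (auto elim: subseq_appendE)
    have "length z2 \<le> 1" using z(3) list_emb_length by fastforce
    moreover have "length z1 \<le> ld ys" using z zs by (intro ld_ge) (auto simp: sorted_wrt_append)
    ultimately show "length zs \<le> Suc (ld ys)" using z by simp
  qed
next
  obtain zs where zs: "subseq zs ys" "sorted_wrt (>) zs" "length zs = ld ys" by (rule ld_obtain)
  have "subseq (zs @ [x]) (ys @ [x])" using zs by simp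
  moreover have "sorted_wrt (>) (zs @ [x])" using zs assms subseq_set_sub
    by (fastforce simp: sorted_wrt_append)
  ultimately show "Suc (ld ys) \<le> ld (ys @ [x])" using zs ld_ge by fastforce
qed

lemma subseq_map_invE:
  assumes "subseq zs (map h xs)"
  obtains ws where "subseq ws xs" "zs = map h ws"
  using assms
proof (induction xs arbitrary: zs thesis)
  case Nil
  then show ?case using list_emb_Nil2 by fastforce
next
  case (Cons x xs)
  note IH = Cons.IH and th = Cons(2) and sub = Cons(3)
  show ?case
  proof (cases zs)
    case Nil
    then show ?thesis using th[of "[]"] by simp
  next
    case (Cons z zs')
    show ?thesis
    proof (cases "z = h x")
      case True
      then have "subseq zs' (map h xs) \<or> subseq zs (map h xs)" using sub Cons by auto
      then show ?thesis
      proof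
        assume "subseq zs' (map h xs)"
        then obtain ws where "subseq ws xs" "zs' = map h ws" using IH by blast
        then show ?thesis using th[of "x # ws"] Cons True by simp
      next
        assume "subseq zs (map h xs)"
        then obtain ws where "subseq ws xs" "zs = map h ws" using IH by blast
        then show ?thesis using th[of "ws"] by (simp add: list_emb.list_emb_Cons)
      qed
    next
      case False
      then have "subseq zs (map h xs)" using sub Cons by auto
      then obtain ws where "subseq ws xs" "zs = map h ws" using IH by blast
      then show ?thesis using th[of "ws"] by (simp add: list_emb.list_emb_Cons)
    qed
  qed
qed

lemma ld_relabel:
  assumes "\<forall>a\<in>set xs. \<forall>b\<in>set xs. a < b \<longrightarrow> h a < h b"
  shows "ld (map h xs) = ld xs"
proof (rule antisym)
  show "ld (map h xs) \<le> ld xs"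
    unfolding ld_le_iff
  proof (intro allI impI)
    fix zs assume zs: "subseq zs (map h xs) \<and> sorted_wrt (>) zs"
    then obtain ws where ws: "subseq ws xs" "zs = map h ws" by (auto elim: subseq_map_invE)
    have sw: "set ws \<subseteq> set xs" using ws subseq_set_sub by blast
    have "sorted_wrt (>) ws"
    proof -
      have "sorted_wrt (\<lambda>a b. h b < h a) ws" using zs ws by (simp add: sorted_wrt_map)
      then show ?thesis
      proof (rule sorted_wrt_mono_rel[rotated])
        fix a b assume ab: "a \<in> set ws" "b \<in> set ws" "h b < h a"
        show "b < a"
        proof (rule ccontr)
          assume "\<not> b < a"
          then have "a < b \<or> a = b" by auto
          then show False
          proof
            assume "a < b"
            then have "h a < h b" using assms ab sw by blast
            then show False using ab(3) by simp
          next
            assume "a = b" then show False using ab(3) by simp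
          qed
        qed
      qed
    qed
    then have "length ws \<le> ld xs" using ws ld_ge by blast
    then show "length zs \<le> ld xs" using ws by simp
  qed
next
  obtain ws where ws: "subseq ws xs" "sorted_wrt (>) ws" "length ws = ld xs" by (rule ld_obtain)
  have sw: "set ws \<subseteq> set xs" using ws subseq_set_sub by blast
  have "sorted_wrt (>) (map h ws)"
    unfolding sorted_wrt_map using ws(2)
    by (rule sorted_wrt_mono_rel[rotated]) (use assms sw in blast)
  moreover have "subseq (map h ws) (map h xs)" using ws subseq_map by blast
  ultimately show "ld xs \<le> ld (map h xs)" using ld_ge ws by fastforce
qed

lemma subseq_two_cases:
  assumes "subseq w [x, y]"
  shows "w = [] \<or> w = [x] \<or> w = [y] \<or> w = [x, y]"
proof -
  have one: "u = [] \<or> u = [y]" if "subseq u [y]" for u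
    using that by (cases u) (auto split: if_splits dest: list_emb_Nil2)
  show ?thesis
  proof (cases w)
    case Nil then show ?thesis by simp
  next
    case (Cons a w')
    show ?thesis
    proof (cases "a = x")
      case True
      then have "subseq w' [y] \<or> subseq (a # w') [y]" using assms Cons by auto
      then show ?thesis using one Cons True by blast
    next
      case False
      then have "subseq (a # w') [y]" using assms Cons by auto
      then show ?thesis using one Cons by blast
    qed
  qed
qed

lemma sorted_gt_distinct: "sorted_wrt (>) (l::nat list) \<Longrightarrow> distinct l"
  by (induct l) auto

lemma len_le1_if_all_eq:
  assumes "distinct l" "\<forall>a\<in>set l. \<forall>b\<in>set l. a = b"
  shows "length l \<le> 1"
proof (cases l)
  case Nil then show ?thesis by simp
next
  case (Cons a l')
  note la = this
  show ?thesis
  proof (cases l')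
    case Nil then show ?thesis using la by simp
  next
    case (Cons b l'')
    then have "a \<in> set l" "b \<in> set l" using la by auto
    then have "a = b" using assms(2) by blast
    then show ?thesis using assms(1) la Cons by simp
  qed
qed

lemma ld_snoc2:
  assumes yx: "y < x" and zs1: "\<forall>z\<in>set zs. x < z \<or> z < y"
    and zs2: "\<forall>z\<in>set zs. \<forall>z'\<in>set zs. z < y \<longrightarrow> z' < y \<longrightarrow> z = z'"
  shows "ld (zs @ [x, y]) = Suc (ld (zs @ [x]))"
proof (rule antisym)
  show "ld (zs @ [x, y]) \<le> Suc (ld (zs @ [x]))"
    unfolding ld_le_iff
  proof (intro allI impI)
    fix ws assume ws: "subseq ws (zs @ [x, y]) \<and> sorted_wrt (>) ws"
    then obtain w1 w2 where w: "ws = w1 @ w2" "subseq w1 zs" "subseq w2 [x, y]"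
      by (auto elim: subseq_appendE)
    have "w2 = [] \<or> w2 = [x] \<or> w2 = [y] \<or> w2 = [x, y]" using w(3) by (rule subseq_two_cases)
    then show "length ws \<le> Suc (ld (zs @ [x]))"
    proof (elim disjE)
      assume "w2 = []"
      then have "subseq ws (zs @ [x])" using w by (simp add: subseq_rev_drop_many)
      then show ?thesis using ws ld_ge by fastforce
    next
      assume "w2 = [x]"
      then have "subseq ws (zs @ [x])" using w by (simp add: list_emb_append_mono)
      then show ?thesis using ws ld_ge by fastforce
    next
      assume "w2 = [y]"
      then have "subseq w1 (zs @ [x])" using w by (simp add: subseq_rev_drop_many)
      moreover have "sorted_wrt (>) w1" using ws w by (simp add: sorted_wrt_append)
      ultimately show ?thesis using ws ld_ge w \<open>w2 = [y]\<close> by fastforce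
    next
      assume "w2 = [x, y]"
      then have "subseq (w1 @ [x]) (zs @ [x])" using w by (simp add: list_emb_append_mono)
      moreover have "sorted_wrt (>) (w1 @ [x])" using ws w \<open>w2 = [x, y]\<close> by (simp add: sorted_wrt_append)
      ultimately show ?thesis using ws ld_ge[of "w1 @ [x]" "zs @ [x]"] w \<open>w2 = [x, y]\<close> by simp
    qed
  qed
next
  obtain ws where ws: "subseq ws (zs @ [x])" "sorted_wrt (>) ws" "length ws = ld (zs @ [x])"
    by (rule ld_obtain)
  then obtain w1 w2 where w: "ws = w1 @ w2" "subseq w1 zs" "subseq w2 [x]"
    by (auto elim: subseq_appendE)
  have w2: "w2 = [] \<or> w2 = [x]" using w(3) by (cases w2) (auto split: if_splits dest: list_emb_Nil2)
  have w1z: "set w1 \<subseteq> set zs" using w(2) subseq_set_sub by blast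
  show "Suc (ld (zs @ [x])) \<le> ld (zs @ [x, y])"
  proof (cases "w2 = [x]")
    case True
    have "subseq (ws @ [y]) ((zs @ [x]) @ [y])" using list_emb_append_mono[OF ws(1), of "[y]" "[y]"] by simp
    then have s: "subseq (ws @ [y]) (zs @ [x, y])" by simp
    have "\<forall>z\<in>set w1. x < z" using ws(2) w True by (simp add: sorted_wrt_append)
    then have "sorted_wrt (>) (ws @ [y])" using ws(2) w True yx by (auto simp: sorted_wrt_append)
    then show ?thesis using s ld_ge ws(3) by fastforce
  next
    case False
    then have ww: "ws = w1" using w w2 by simp
    define u where "u = filter (\<lambda>z. x < z) w1"
    have "subseq u zs" unfolding u_def using w(2) subseq_filter_left subseq_order.order_trans by blast
    then have s: "subseq (u @ [x, y]) (zs @ [x, y])" by (simp add: list_emb_append_mono)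
    have "sorted_wrt (>) u" unfolding u_def using ws(2) ww by (simp add: sorted_wrt_filter)
    then have sd: "sorted_wrt (>) (u @ [x, y])" using yx by (auto simp: sorted_wrt_append u_def)
    have dw: "distinct w1" using ws(2) ww by (simp add: sorted_gt_distinct)
    have "length (filter (\<lambda>z. \<not> x < z) w1) \<le> 1"
    proof (rule len_le1_if_all_eq)
      show "distinct (filter (\<lambda>z. \<not> x < z) w1)" using dw by simp
      show "\<forall>a\<in>set (filter (\<lambda>z. \<not> x < z) w1). \<forall>b\<in>set (filter (\<lambda>z. \<not> x < z) w1). a = b"
        using zs1 zs2 w1z by auto
    qed
    moreover have "length u + length (filter (\<lambda>z. \<not> x < z) w1) = length w1"
      unfolding u_def by (rule sum_length_filter_compl)
    ultimately have "Suc (length ws) \<le> length (u @ [x, y])" using ww by simp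
    then show ?thesis using ld_ge[OF s sd] ws(3) by simp
  qed
qed

lemma subseq_idx_take:
  assumes "\<forall>a b. a < b \<and> b < m \<longrightarrow> idx a < idx b" "\<forall>a<m. idx a < N" "N \<le> length xs"
  shows "subseq (map (\<lambda>a. xs ! idx a) [0..<m]) (take N xs)"
  using assms
proof (induction m arbitrary: N)
  case 0
  then show ?case by simp
next
  case (Suc m)
  let ?i = "idx m"
  have i: "?i < N" using Suc.prems by simp
  have "subseq (map (\<lambda>a. xs ! idx a) [0..<m]) (take ?i xs)"
    using Suc.prems i by (intro Suc.IH) auto
  then have "subseq (map (\<lambda>a. xs ! idx a) [0..<m] @ [xs ! ?i]) (take ?i xs @ [xs ! ?i])"
    using list_emb_append_mono by fastforce
  moreover have "take ?i xs @ [xs ! ?i] = take (Suc ?i) xs"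
    using i Suc.prems(3) by (simp add: take_Suc_conv_app_nth)
  moreover have "subseq (take (Suc ?i) xs) (take N xs)"
  proof -
    have "take N xs = take (Suc ?i) (take N xs) @ drop (Suc ?i) (take N xs)"
      by (rule append_take_drop_id[symmetric])
    moreover have "take (Suc ?i) (take N xs) = take (Suc ?i) xs" using i by (simp add: min_def)
    ultimately show ?thesis by (metis subseq_rev_drop_many subseq_order.order_refl)
  qed
  ultimately show ?case by (simp add: subseq_order.order_trans)
qed

lemma subseq_idx:
  assumes "\<forall>a b. a < b \<and> b < m \<longrightarrow> idx a < idx b" "\<forall>a<m. idx a < length xs"
  shows "subseq (map (\<lambda>a. xs ! idx a) [0..<m]) xs"
  using subseq_idx_take[OF assms order_refl] by simp

lemma subseq_obtain_idx:
  assumes "subseq ys xs"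
  shows "\<exists>idx. (\<forall>a b. a < b \<and> b < length ys \<longrightarrow> idx a < idx b) \<and>
               (\<forall>a<length ys. idx a < length xs \<and> ys ! a = xs ! idx a)"
  using assms
proof (induction rule: list_emb.induct)
  case (list_emb_Nil ys)
  then show ?case by simp
next
  case (list_emb_Cons xs ys y)
  then obtain idx where idx: "\<forall>a b. a < b \<and> b < length xs \<longrightarrow> idx a < idx b"
    "\<forall>a<length xs. idx a < length ys \<and> xs ! a = ys ! idx a" by blast
  show ?case
    by (rule exI[of _ "\<lambda>a. Suc (idx a)"]) (use idx in auto)
next
  case (list_emb_Cons2 x y xs ys)
  then obtain idx where idx: "\<forall>a b. a < b \<and> b < length xs \<longrightarrow> idx a < idx b"
    "\<forall>a<length xs. idx a < length ys \<and> xs ! a = ys ! idx a" by blast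
  let ?j = "\<lambda>a. case a of 0 \<Rightarrow> 0 | Suc a' \<Rightarrow> Suc (idx a')"
  have 1: "\<forall>a b. a < b \<and> b < length (x # xs) \<longrightarrow> ?j a < ?j b"
  proof (intro allI impI)
    fix a b assume ab: "a < b \<and> b < length (x # xs)"
    then obtain b' where b': "b = Suc b'" by (cases b) auto
    show "?j a < ?j b"
    proof (cases a)
      case 0 then show ?thesis using b' by simp
    next
      case (Suc a') then show ?thesis using b' ab idx(1) by auto
    qed
  qed
  have 2: "\<forall>a<length (x # xs). ?j a < length (y # ys) \<and> (x # xs) ! a = (y # ys) ! ?j a"
  proof (intro allI impI)
    fix a assume a: "a < length (x # xs)"
    show "?j a < length (y # ys) \<and> (x # xs) ! a = (y # ys) ! ?j a"
    proof (cases a)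
      case 0 then show ?thesis using list_emb_Cons2 by simp
    next
      case (Suc a') then show ?thesis using a idx(2) by auto
    qed
  qed
  show ?case using 1 2 by blast
qed

lemma contains_pattern_subseq:
  "contains_pattern xs \<sigma> \<longleftrightarrow>
    (\<exists>ys. subseq ys xs \<and> length ys = length \<sigma> \<and>
       (\<forall>a<length \<sigma>. \<forall>b<length \<sigma>. (ys ! a < ys ! b) = (\<sigma> ! a < \<sigma> ! b)))"
proof
  assume "contains_pattern xs \<sigma>"
  then obtain idx where idx: "\<forall>a b. a < b \<and> b < length \<sigma> \<longrightarrow> idx a < idx b"
    "\<forall>a < length \<sigma>. idx a < length xs"
    "\<forall>a < length \<sigma>. \<forall>b < length \<sigma>. (xs ! idx a < xs ! idx b) \<longleftrightarrow> (\<sigma> ! a < \<sigma> ! b)"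
    unfolding contains_pattern_def by blast
  let ?ys = "map (\<lambda>a. xs ! idx a) [0..<length \<sigma>]"
  have "subseq ?ys xs" using idx by (intro subseq_idx) auto
  moreover have "\<forall>a<length \<sigma>. \<forall>b<length \<sigma>. (?ys ! a < ?ys ! b) = (\<sigma> ! a < \<sigma> ! b)"
    using idx(3) by simp
  ultimately show "\<exists>ys. subseq ys xs \<and> length ys = length \<sigma> \<and>
       (\<forall>a<length \<sigma>. \<forall>b<length \<sigma>. (ys ! a < ys ! b) = (\<sigma> ! a < \<sigma> ! b))" by auto
next
  assume "\<exists>ys. subseq ys xs \<and> length ys = length \<sigma> \<and>
       (\<forall>a<length \<sigma>. \<forall>b<length \<sigma>. (ys ! a < ys ! b) = (\<sigma> ! a < \<sigma> ! b))"
  then obtain ys where ys: "subseq ys xs" "length ys = length \<sigma>"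
    "\<forall>a<length \<sigma>. \<forall>b<length \<sigma>. (ys ! a < ys ! b) = (\<sigma> ! a < \<sigma> ! b)" by blast
  obtain idx where idx: "\<forall>a b. a < b \<and> b < length ys \<longrightarrow> idx a < idx b"
      "\<forall>a<length ys. idx a < length xs \<and> ys ! a = xs ! idx a"
    using subseq_obtain_idx[OF ys(1)] by blast
  show "contains_pattern xs \<sigma>" unfolding contains_pattern_def
    by (rule exI[of _ idx]) (use idx ys in auto)
qed

lemma all_less3: "(\<forall>a<(3::nat). P a) \<longleftrightarrow> P 0 \<and> P 1 \<and> P 2"
proof
  assume "\<forall>a<3. P a" then show "P 0 \<and> P 1 \<and> P 2" by simp
next
  assume h: "P 0 \<and> P 1 \<and> P 2"
  show "\<forall>a<3. P a"
  proof (intro allI impI)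
    fix a :: nat assume "a < 3"
    then have "a = 0 \<or> a = 1 \<or> a = 2" by linarith
    then show "P a" using h by auto
  qed
qed

lemma all_less3': "(\<forall>a<Suc (Suc (Suc 0)). P a) \<longleftrightarrow> P 0 \<and> P (Suc 0) \<and> P (Suc (Suc 0))"
  by (auto simp: less_Suc_eq)

lemma len3_conv: "length ys = 3 \<Longrightarrow> ys = [ys ! 0, ys ! 1, ys ! 2]"
  by (cases ys; cases "tl ys"; cases "tl (tl ys)") (auto simp: numeral_3_eq_3)

lemma c213_iff:
  "contains_pattern xs [2,1,3] \<longleftrightarrow> (\<exists>x y z. subseq [x,y,z] xs \<and> y < x \<and> x < z)"
proof -
  have eq: "(\<forall>a<length [2::nat,1,3]. \<forall>b<length [2::nat,1,3].
              ([x,y,z] ! a < [x,y,z] ! b) = ([2::nat,1,3] ! a < [2,1,3] ! b))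
           \<longleftrightarrow> y < x \<and> x < z" for x y z :: nat
    by (auto simp: all_less3')
  show ?thesis
  proof
    assume "contains_pattern xs [2,1,3]"
    then obtain ys where ys: "subseq ys xs" "length ys = length [2::nat,1,3]"
      "\<forall>a<length [2::nat,1,3]. \<forall>b<length [2::nat,1,3]. (ys ! a < ys ! b) = ([2::nat,1,3] ! a < [2,1,3] ! b)"
      unfolding contains_pattern_subseq by blast
    have "ys = [ys ! 0, ys ! 1, ys ! 2]" using ys(2) by (intro len3_conv) simp
    then show "\<exists>x y z. subseq [x,y,z] xs \<and> y < x \<and> x < z" using ys eq by metis
  next
    assume "\<exists>x y z. subseq [x,y,z] xs \<and> y < x \<and> x < z"
    then obtain x y z where "subseq [x,y,z] xs" "y < x" "x < z" by blast
    then show "contains_pattern xs [2,1,3]" unfolding contains_pattern_subseq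
      using eq[of x y z] by (intro exI[of _ "[x,y,z]"]) simp
  qed
qed

lemma delta_nth: "a < k \<Longrightarrow> delta k ! a = k - a"
  unfolding delta_def by (subst rev_nth) (auto simp del: upt_Suc)

lemma delta_len[simp]: "length (delta k) = k"
  unfolding delta_def by simp

lemma delta_iff: "contains_pattern xs (delta k) \<longleftrightarrow> k \<le> ld xs"
proof -
  have cond: "(\<forall>a<k. \<forall>b<k. (ys ! a < ys ! b) = (delta k ! a < delta k ! b)) \<longleftrightarrow> sorted_wrt (>) ys"
    if "length ys = k" for ys :: "nat list"
  proof -
    have "(\<forall>a<k. \<forall>b<k. (ys ! a < ys ! b) = (delta k ! a < delta k ! b)) \<longleftrightarrow>
          (\<forall>a<k. \<forall>b<k. (ys ! a < ys ! b) = (b < a))"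
      by (auto simp: delta_nth)
    also have "\<dots> \<longleftrightarrow> sorted_wrt (>) ys"
    proof
      assume h: "\<forall>a<k. \<forall>b<k. (ys ! a < ys ! b) = (b < a)"
      show "sorted_wrt (>) ys" unfolding sorted_wrt_iff_nth_less
        using h that by auto
    next
      assume h: "sorted_wrt (>) ys"
      show "\<forall>a<k. \<forall>b<k. (ys ! a < ys ! b) = (b < a)"
      proof (intro allI impI)
        fix a b assume ab: "a < k" "b < k"
        show "(ys ! a < ys ! b) = (b < a)"
        proof (cases "a < b")
          case True
          then have "ys ! b < ys ! a" using h ab that by (auto simp: sorted_wrt_iff_nth_less)
          then show ?thesis using True by simp
        next
          case False
          show ?thesis
          proof (cases "a = b")
            case True then show ?thesis by simp
          next
            case False
            then have "b < a" using \<open>\<not> a < b\<close> by simp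
            then have "ys ! a < ys ! b" using h ab that by (auto simp: sorted_wrt_iff_nth_less)
            then show ?thesis using \<open>b < a\<close> by simp
          qed
        qed
      qed
    qed
    finally show ?thesis .
  qed
  show ?thesis
  proof
    assume "contains_pattern xs (delta k)"
    then obtain ys where ys: "subseq ys xs" "length ys = k"
      "\<forall>a<k. \<forall>b<k. (ys ! a < ys ! b) = (delta k ! a < delta k ! b)"
      unfolding contains_pattern_subseq by auto
    then have "sorted_wrt (>) ys" using cond by blast
    then show "k \<le> ld xs" using ld_ge ys by fastforce
  next
    assume "k \<le> ld xs"
    then obtain ys where ys: "subseq ys xs" "sorted_wrt (>) ys" "k \<le> length ys"
      unfolding ld_ge_iff by blast
    have "subseq (take k ys) xs" using ys(1)
      by (meson prefix_imp_subseq subseq_order.order_trans take_is_prefix)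
    moreover have "sorted_wrt (>) (take k ys)" using ys(2) by (rule sorted_wrt_take)
    moreover have "length (take k ys) = k" using ys(3) by simp
    ultimately have "subseq (take k ys) xs \<and> length (take k ys) = length (delta k) \<and>
       (\<forall>a<length (delta k). \<forall>b<length (delta k). (take k ys ! a < take k ys ! b) = (delta k ! a < delta k ! b))"
      using cond[of "take k ys"] by simp
    then show "contains_pattern xs (delta k)" unfolding contains_pattern_subseq by blast
  qed
qed

fun nxa :: "nat list \<Rightarrow> nat \<Rightarrow> nat" where
  "nxa (u # v # w) x = (if u = x then v else nxa (v # w) x)"
| "nxa _ x = x"

definition nxt :: "nat list \<Rightarrow> nat \<Rightarrow> nat" where
  "nxt c x = nxa (c @ [hd c]) x"

lemma nxa_mid: "x \<notin> set u \<Longrightarrow> nxa (u @ x # y # w) x = y"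
proof (induction u)
  case Nil then show ?case by simp
next
  case (Cons a u)
  then show ?case by (cases u) auto
qed

lemma nxa_out: "x \<notin> set l \<Longrightarrow> nxa l x = x"
  by (induction l x rule: nxa.induct) auto

lemma nxt_mid: "distinct (u @ x # y # w) \<Longrightarrow> nxt (u @ x # y # w) x = y"
  unfolding nxt_def using nxa_mid[of x u y "w @ [hd (u @ x # y # w)]"] by simp

lemma nxt_last: "distinct (u @ [x]) \<Longrightarrow> nxt (u @ [x]) x = hd (u @ [x])"
  unfolding nxt_def using nxa_mid[of x u "hd (u @ [x])" "[]"] by simp

lemma nxt_out: "x \<notin> set c \<Longrightarrow> nxt c x = x"
proof -
  assume x: "x \<notin> set c"
  show ?thesis
  proof (cases c)
    case Nil then show ?thesis by (simp add: nxt_def)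
  next
    case (Cons a l)
    then have "x \<notin> set (c @ [hd c])" using x by auto
    then show ?thesis unfolding nxt_def by (rule nxa_out)
  qed
qed

lemma nxt_idx:
  assumes "distinct c" "Suc i < length c"
  shows "nxt c (c ! i) = c ! Suc i"
proof -
  have "c = take i c @ drop i c" by simp
  also have "drop i c = c ! i # drop (Suc i) c" using assms by (simp add: Cons_nth_drop_Suc)
  also have "drop (Suc i) c = c ! Suc i # drop (Suc (Suc i)) c" using assms by (simp add: Cons_nth_drop_Suc)
  finally have eq: "c = take i c @ c ! i # c ! Suc i # drop (Suc (Suc i)) c" .
  show ?thesis using nxt_mid[of "take i c" "c ! i" "c ! Suc i" "drop (Suc (Suc i)) c"] eq assms(1)
    by simp
qed

lemma nxt_lastc:
  assumes "distinct c" "c \<noteq> []"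
  shows "nxt c (last c) = hd c"
proof -
  have eq: "c = butlast c @ [last c]" using assms by simp
  show ?thesis using nxt_last[of "butlast c" "last c"] eq assms(1) by simp
qed

lemma nxt_in:
  assumes "distinct c" "x \<in> set c"
  shows "nxt c x \<in> set c"
proof -
  obtain i where i: "i < length c" "x = c ! i" using assms by (auto simp: in_set_conv_nth)
  show ?thesis
  proof (cases "Suc i < length c")
    case True then show ?thesis using nxt_idx assms i by simp
  next
    case False
    have ne: "c \<noteq> []" using i by auto
    have "i = length c - 1" using False i by linarith
    then have "x = last c" using i ne by (simp add: last_conv_nth)
    then show ?thesis using nxt_lastc[OF assms(1) ne] hd_in_set[OF ne] by simp
  qed
qed

definition ol :: "nat list \<Rightarrow> nat list" where
  "ol c = map (nxt c) [1..<Suc (length c)]"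

definition av213 :: "nat list \<Rightarrow> bool" where
  "av213 c \<longleftrightarrow> \<not> (\<exists>x y z. subseq [x,y,z] c \<and> y < x \<and> x < z)"

definition TT :: "nat \<Rightarrow> nat list set" where
  "TT m = {c. distinct c \<and> set c = {1..m} \<and> hd c = 1 \<and> av213 c}"

lemma TT_length: "c \<in> TT m \<Longrightarrow> length c = m"
  unfolding TT_def using distinct_card by fastforce

lemma TT_finite: "finite (TT m)"
proof -
  have "TT m \<subseteq> {c. set c \<subseteq> {1..m} \<and> length c = m}" using TT_length unfolding TT_def by auto
  moreover have "finite {c. set c \<subseteq> {1..m} \<and> length c = m}"
    by (rule finite_lists_length_eq) simp
  ultimately show ?thesis by (rule finite_subset)
qed

lemma cycle_form_props:
  assumes cp: "cyclic_perm n p" and n: "1 \<le> n"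
  shows "distinct (cycle_form n p)" "hd (cycle_form n p) = 1" "set (cycle_form n p) = {1..n}"
    "\<And>x. x \<in> {1..n} \<Longrightarrow> p x = nxt (cycle_form n p) x"
proof -
  let ?c = "cycle_form n p"
  have pp: "p permutes {1..n}" and sc: "set ?c = {1..n}" using cp unfolding cyclic_perm_def by auto
  have len: "length ?c = n" unfolding cycle_form_def by simp
  show dc: "distinct ?c"
    using sc len by (intro card_distinct) simp
  show "hd ?c = 1" using n unfolding cycle_form_def by (simp add: hd_map upt_conv_Cons)
  show "set ?c = {1..n}" by (rule sc)
  have nth: "?c ! i = (p ^^ i) 1" if "i < n" for i using that unfolding cycle_form_def by simp
  have pn: "(p ^^ n) 1 = 1"
  proof -
    have "(p ^^ i) 1 \<in> {1..n}" for i
    proof (induction i)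
      case 0 then show ?case using n by simp
    next
      case (Suc i)
      then have "p ((p ^^ i) 1) \<in> {1..n}" using permutes_in_image[OF pp] by blast
      then show ?case by simp
    qed
    then have "(p ^^ n) 1 \<in> set ?c" using sc by blast
    then obtain j where j: "j < n" "(p ^^ n) 1 = ?c ! j" using len by (auto simp: in_set_conv_nth)
    show ?thesis
    proof (cases j)
      case 0 then show ?thesis using j nth n by simp
    next
      case (Suc j')
      have "p ((p ^^ (n - 1)) 1) = p ((p ^^ j') 1)"
        using j nth Suc n by (metis Suc_diff_1 comp_apply funpow.simps(2) less_le_trans zero_less_one)
      then have "(p ^^ (n - 1)) 1 = (p ^^ j') 1" using permutes_inj[OF pp] by (simp add: inj_eq)
      then have "?c ! (n - 1) = ?c ! j'" using nth j Suc n by simp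
      moreover have "n - 1 \<noteq> j'" using j Suc by simp
      ultimately show ?thesis using dc len j Suc n by (simp add: nth_eq_iff_index_eq)
    qed
  qed
  fix x assume x: "x \<in> {1..n}"
  then obtain i where i: "i < n" "x = ?c ! i" using sc len by (metis in_set_conv_nth)
  show "p x = nxt ?c x"
  proof (cases "Suc i < n")
    case True
    then have "nxt ?c x = ?c ! Suc i" using nxt_idx dc len i by simp
    then show ?thesis using nth True i by simp
  next
    case False
    then have i1: "i = n - 1" using i by simp
    have ne': "?c \<noteq> []" using len n by auto
    then have "x = last ?c" using i len n i1 by (simp add: last_conv_nth)
    then have "nxt ?c x = hd ?c" using nxt_lastc dc len n by fastforce
    also have "hd ?c = 1" using n unfolding cycle_form_def by (simp add: hd_map upt_conv_Cons)
    finally have "nxt ?c x = 1" .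
    moreover have "p x = (p ^^ n) 1" using i nth i1 n
      by (metis Suc_diff_1 comp_apply funpow.simps(2) less_le_trans zero_less_one)
    ultimately show ?thesis using pn by simp
  qed
qed

lemma nxt_permutes:
  assumes "distinct c" "set c = S" "c \<noteq> []"
  shows "nxt c permutes S"
proof (rule bij_imp_permutes)
  have sub: "nxt c ` S \<subseteq> S" using nxt_in assms by blast
  have sup: "S \<subseteq> nxt c ` S"
  proof
    fix y assume "y \<in> S"
    then obtain j where j: "j < length c" "y = c ! j" using assms by (auto simp: in_set_conv_nth)
    show "y \<in> nxt c ` S"
    proof (cases j)
      case 0
      then have "y = hd c" using j assms by (simp add: hd_conv_nth)
      then have "y = nxt c (last c)" using nxt_lastc assms by simp
      then show ?thesis using assms by auto
    next
      case (Suc j')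
      then have "y = nxt c (c ! j')" using nxt_idx assms j by simp
      then show ?thesis using assms j Suc by auto
    qed
  qed
  have fin: "finite S" using assms by auto
  have "inj_on (nxt c) S" using finite_surj_inj[OF fin sup] .
  then show "bij_betw (nxt c) S S" unfolding bij_betw_def using sub sup by blast
next
  fix x assume "x \<notin> S" then show "nxt c x = x" using nxt_out assms by simp
qed

lemma nxt_cycle_form:
  assumes "c \<in> TT n" "1 \<le> n"
  shows "cyclic_perm n (nxt c)" "cycle_form n (nxt c) = c"
proof -
  have dc: "distinct c" and sc: "set c = {1..n}" and hc: "hd c = 1" using assms unfolding TT_def by auto
  have len: "length c = n" using assms TT_length by blast
  have ne: "c \<noteq> []" using len assms by auto
  have pw: "(nxt c ^^ i) 1 = c ! i" if "i < n" for i
    using that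
  proof (induction i)
    case 0 then show ?case using hc ne by (simp add: hd_conv_nth)
  next
    case (Suc i)
    then show ?case using nxt_idx[OF dc] len by simp
  qed
  have "map (\<lambda>i. (nxt c ^^ i) 1) [0..<n] = map (\<lambda>i. c ! i) [0..<n]"
  proof (rule map_cong)
    fix i assume "i \<in> set [0..<n]"
    then have "i < n" by simp
    then show "(nxt c ^^ i) 1 = c ! i" by (rule pw)
  qed simp
  also have "\<dots> = c" using len map_nth[of c] by simp
  finally show cf: "cycle_form n (nxt c) = c" unfolding cycle_form_def .
  show "cyclic_perm n (nxt c)" unfolding cyclic_perm_def
    using nxt_permutes[OF dc sc ne] cf sc by simp
  
qed

lemma mono_reflect:
  fixes h :: "nat \<Rightarrow> nat"
  assumes "\<forall>a\<in>S. \<forall>b\<in>S. a < b \<longrightarrow> h a < h b" "a \<in> S" "b \<in> S" "h a < h b"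
  shows "(a::nat) < b"
proof (rule ccontr)
  assume "\<not> a < b"
  then have "b < a \<or> a = b" by auto
  then show False
  proof
    assume "b < a" then have "h b < h a" using assms by blast
    then show False using assms(4) by simp
  next
    assume "a = b" then show False using assms(4) by simp
  qed
qed

lemma av_Cons_min:
  assumes "\<forall>v\<in>set l. h < v"
  shows "av213 (h # l) \<longleftrightarrow> av213 l"
proof
  assume a: "av213 (h # l)"
  show "av213 l" unfolding av213_def
  proof
    assume "\<exists>x y z. subseq [x,y,z] l \<and> y < x \<and> x < z"
    then obtain x y z where s: "subseq [x,y,z] l" "y < x" "x < z" by blast
    then have "subseq [x,y,z] (h # l)" by (intro list_emb.list_emb_Cons)
    then show False using a s unfolding av213_def by blast
  qed
next
  assume a: "av213 l"
  show "av213 (h # l)" unfolding av213_def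
  proof
    assume "\<exists>x y z. subseq [x,y,z] (h # l) \<and> y < x \<and> x < z"
    then obtain x y z where s: "subseq [x,y,z] (h # l)" "y < x" "x < z" by blast
    show False
    proof (cases "x = h")
      case True
      then have "subseq [y,z] l" using s(1) by simp
      then have "y \<in> set l" using subseq_set_sub by fastforce
      then show False using assms s True by auto
    next
      case False
      then have "subseq [x,y,z] l" using s(1) by simp
      then show False using a s unfolding av213_def by blast
    qed
  qed
qed

lemma split3:
  assumes "[x,y,z] = s1 @ s2"
  shows "(s1 = [] \<and> s2 = [x,y,z]) \<or> (s1 = [x] \<and> s2 = [y,z]) \<or> (s1 = [x,y] \<and> s2 = [z]) \<or> (s1 = [x,y,z] \<and> s2 = [])"
proof -
  have l: "length s1 \<le> 3" using arg_cong[OF assms, of length] by simp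
  have s1: "s1 = take (length s1) [x,y,z]" and s2: "s2 = drop (length s1) [x,y,z]"
    using assms by (simp_all add: append_eq_conv_conj)
  have "length s1 = 0 \<or> length s1 = 1 \<or> length s1 = 2 \<or> length s1 = 3" using l by linarith
  then show ?thesis
  proof (elim disjE)
    assume h: "length s1 = 0" show ?thesis using s1 s2 unfolding h by simp
  next
    assume h: "length s1 = 1" show ?thesis using s1 s2 unfolding h by simp
  next
    assume h: "length s1 = 2" show ?thesis using s1 s2 unfolding h by (simp add: numeral_2_eq_2)
  next
    assume h: "length s1 = 3" show ?thesis using s1 s2 unfolding h by (simp add: numeral_3_eq_3)
  qed
qed

lemma av_app_above:
  assumes "\<forall>u\<in>set U. \<forall>v\<in>set V. v < u"
  shows "av213 (U @ V) \<longleftrightarrow> av213 U \<and> av213 V"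
proof
  assume a: "av213 (U @ V)"
  have "av213 U" unfolding av213_def
  proof
    assume "\<exists>x y z. subseq [x,y,z] U \<and> y < x \<and> x < z"
    then obtain x y z where s: "subseq [x,y,z] U" "y < x" "x < z" by blast
    then have "subseq [x,y,z] (U @ V)" by (intro subseq_rev_drop_many)
    then show False using a s unfolding av213_def by blast
  qed
  moreover have "av213 V" unfolding av213_def
  proof
    assume "\<exists>x y z. subseq [x,y,z] V \<and> y < x \<and> x < z"
    then obtain x y z where s: "subseq [x,y,z] V" "y < x" "x < z" by blast
    then have "subseq [x,y,z] (U @ V)" by (intro subseq_drop_many)
    then show False using a s unfolding av213_def by blast
  qed
  ultimately show "av213 U \<and> av213 V" ..
next
  assume a: "av213 U \<and> av213 V"
  show "av213 (U @ V)" unfolding av213_def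
  proof
    assume "\<exists>x y z. subseq [x,y,z] (U @ V) \<and> y < x \<and> x < z"
    then obtain x y z where s: "subseq [x,y,z] (U @ V)" "y < x" "x < z" by blast
    then obtain s1 s2 where ss: "[x,y,z] = s1 @ s2" "subseq s1 U" "subseq s2 V"
      by (auto elim: subseq_appendE)
    from split3[OF ss(1)] show False
    proof (elim disjE conjE)
      assume "s1 = []" "s2 = [x,y,z]" then show False using a s ss unfolding av213_def by blast
    next
      assume "s1 = [x]" "s2 = [y,z]"
      then have "x \<in> set U" "z \<in> set V" using ss subseq_set_sub by fastforce+
      then show False using assms s by fastforce
    next
      assume "s1 = [x,y]" "s2 = [z]"
      then have "x \<in> set U" "z \<in> set V" using ss subseq_set_sub by fastforce+
      then show False using assms s by fastforce
    next
      assume "s1 = [x,y,z]" "s2 = []" then show False using a s ss unfolding av213_def by blast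
    qed
  qed
qed

lemma av_map:
  assumes m: "\<forall>a\<in>set l. \<forall>b\<in>set l. a < b \<longrightarrow> h a < h b"
  shows "av213 (map h l) \<longleftrightarrow> av213 l"
proof
  assume a: "av213 (map h l)"
  show "av213 l" unfolding av213_def
  proof
    assume "\<exists>x y z. subseq [x,y,z] l \<and> y < x \<and> x < z"
    then obtain x y z where s: "subseq [x,y,z] l" "y < x" "x < z" by blast
    have "x \<in> set l" "y \<in> set l" "z \<in> set l" using subseq_set_sub[OF s(1)] by auto
    then have "h y < h x" "h x < h z" using m s by auto
    moreover have "subseq [h x, h y, h z] (map h l)" using subseq_map[OF s(1)] by simp
    ultimately show False using a unfolding av213_def by blast
  qed
next
  assume a: "av213 l"
  show "av213 (map h l)" unfolding av213_def
  proof
    assume "\<exists>x y z. subseq [x,y,z] (map h l) \<and> y < x \<and> x < z"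
    then obtain x y z where s: "subseq [x,y,z] (map h l)" "y < x" "x < z" by blast
    then obtain ws where ws: "subseq ws l" "[x,y,z] = map h ws" by (auto elim: subseq_map_invE)
    then obtain x' y' z' where w: "ws = [x',y',z']" "x = h x'" "y = h y'" "z = h z'"
      by (cases ws; cases "tl ws"; cases "tl (tl ws)") auto
    have in3: "x' \<in> set l" "y' \<in> set l" "z' \<in> set l" using subseq_set_sub[OF ws(1)] w by auto
    have "y' < x'" using mono_reflect[OF m in3(2) in3(1)] s w by simp
    moreover have "x' < z'" using mono_reflect[OF m in3(1) in3(3)] s w by simp
    ultimately show False using a ws w unfolding av213_def by blast
  qed
qed

lemma split_above_below:
  assumes "\<not> (\<exists>y z. subseq [y,z] r \<and> y < a \<and> a < z)" "(a::nat) \<notin> set r"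
  shows "r = filter (\<lambda>x. a < x) r @ filter (\<lambda>x. x < a) r"
  using assms
proof (induction r)
  case Nil then show ?case by simp
next
  case (Cons v r)
  have "\<not> (\<exists>y z. subseq [y,z] r \<and> y < a \<and> a < z)"
  proof
    assume "\<exists>y z. subseq [y,z] r \<and> y < a \<and> a < z"
    then obtain y z where yz: "subseq [y,z] r" "y < a" "a < z" by blast
    then have "subseq [y,z] (v # r)" by (intro list_emb.list_emb_Cons)
    then show False using Cons.prems(1) yz by blast
  qed
  then have IH: "r = filter (\<lambda>x. a < x) r @ filter (\<lambda>x. x < a) r"
    using Cons.prems(2) by (intro Cons.IH) auto
  show ?case
  proof (cases "a < v")
    case True
    then show ?thesis using IH by simp
  next
    case False
    then have va: "v < a" using Cons.prems by auto
    have "\<forall>z\<in>set r. z < a"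
    proof
      fix z assume z: "z \<in> set r"
      have "subseq [v,z] (v # r)" using z by (simp add: subseq_singleton_left)
      then have "\<not> a < z" using Cons.prems va by blast
      moreover have "z \<noteq> a" using Cons.prems z by auto
      ultimately show "z < a" by simp
    qed
    then have "filter (\<lambda>x. a < x) r = []" "filter (\<lambda>x. x < a) r = r" by (auto simp: filter_empty_conv)
    then show ?thesis using va by simp
  qed
qed

lemma av_tl: "av213 (h # l) \<Longrightarrow> av213 l"
  unfolding av213_def
proof
  assume a: "\<not> (\<exists>x y z. subseq [x,y,z] (h # l) \<and> y < x \<and> x < z)"
  assume "\<exists>x y z. subseq [x,y,z] l \<and> y < x \<and> x < z"
  then obtain x y z where s: "subseq [x,y,z] l" "y < x" "x < z" by blast
  then have "subseq [x,y,z] (h # l)" by (intro list_emb.list_emb_Cons)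
  then show False using a s by blast
qed

lemma av_app1: "av213 (U @ V) \<Longrightarrow> av213 U"
  unfolding av213_def
proof
  assume a: "\<not> (\<exists>x y z. subseq [x,y,z] (U @ V) \<and> y < x \<and> x < z)"
  assume "\<exists>x y z. subseq [x,y,z] U \<and> y < x \<and> x < z"
  then obtain x y z where s: "subseq [x,y,z] U" "y < x" "x < z" by blast
  then have "subseq [x,y,z] (U @ V)" by (intro subseq_rev_drop_many)
  then show False using a s by blast
qed

lemma av_app2: "av213 (U @ V) \<Longrightarrow> av213 V"
  unfolding av213_def
proof
  assume a: "\<not> (\<exists>x y z. subseq [x,y,z] (U @ V) \<and> y < x \<and> x < z)"
  assume "\<exists>x y z. subseq [x,y,z] V \<and> y < x \<and> x < z"
  then obtain x y z where s: "subseq [x,y,z] V" "y < x" "x < z" by blast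
  then have "subseq [x,y,z] (U @ V)" by (intro subseq_drop_many)
  then show False using a s by blast
qed

lemma image_plus_interval: "(\<lambda>x. x + k) ` {a..b} = {a + k..b + (k::nat)}"
proof
  show "(\<lambda>x. x + k) ` {a..b} \<subseteq> {a + k..b + k}" by auto
  show "{a + k..b + k} \<subseteq> (\<lambda>x. x + k) ` {a..b}"
  proof
    fix y assume y: "y \<in> {a + k..b + k}"
    then have "y = (y - k) + k" "y - k \<in> {a..b}" by auto
    then show "y \<in> (\<lambda>x. x + k) ` {a..b}" by blast
  qed
qed

lemma image_minus_interval: "k \<le> a \<Longrightarrow> k \<le> b \<Longrightarrow> (\<lambda>x. x - k) ` {a..b} = {a - k..b - (k::nat)}"
proof
  assume k: "k \<le> a" and kb: "k \<le> b"
  show "(\<lambda>x. x - k) ` {a..b} \<subseteq> {a - k..b - k}" by auto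
  show "{a - k..b - k} \<subseteq> (\<lambda>x. x - k) ` {a..b}"
  proof
    fix y assume y: "y \<in> {a - k..b - k}"
    then have "y = (y + k) - k" "y + k \<in> {a..b}" using k kb by auto
    then show "y \<in> (\<lambda>x. x - k) ` {a..b}" by blast
  qed
qed

lemma TT_facts:
  assumes "c \<in> TT m" "1 \<le> m"
  shows "c = 1 # tl c" "set (tl c) = {2..m}" "distinct (tl c)" "av213 (tl c)" "length (tl c) = m - 1"
proof -
  have d: "distinct c" and s: "set c = {1..m}" and h: "hd c = 1" and a: "av213 c"
    using assms unfolding TT_def by auto
  have ne: "c \<noteq> []" using s assms by auto
  show c: "c = 1 # tl c" using ne h by (cases c) auto
  have "set c = insert 1 (set (tl c))" using c by (metis list.set(2))
  moreover have "1 \<notin> set (tl c)" using d c by (metis distinct.simps(2))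
  ultimately have "set (tl c) = {1..m} - {1}" using s by auto
  also have "{1..m} - {1} = {2..m}" by auto
  finally show "set (tl c) = {2..m}" .
  show "distinct (tl c)" using d by (simp add: distinct_tl)
  show "av213 (tl c)" using a c av_tl by metis
  show "length (tl c) = m - 1" using TT_length[OF assms(1)] by simp
qed

definition comb :: "nat \<Rightarrow> nat list \<Rightarrow> nat list \<Rightarrow> nat list" where
  "comb m2 A B = 1 # Suc m2 # map (\<lambda>x. x + m2) (tl A) @ tl B"

lemma comb_TT:
  assumes A: "A \<in> TT m1" and B: "B \<in> TT m2" and m1: "1 \<le> m1" and m2: "1 \<le> m2"
  shows "comb m2 A B \<in> TT (m1 + m2)"
proof -
  note FA = TT_facts[OF A m1] and FB = TT_facts[OF B m2]
  let ?H = "map (\<lambda>x. x + m2) (tl A)"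
  let ?L = "tl B"
  have sH: "set ?H = {m2 + 2..m1 + m2}" using FA(2) by (simp add: image_plus_interval add.commute)
  have dH: "distinct ?H" using FA(3) by (simp add: distinct_map inj_on_def)
  have sL: "set ?L = {2..m2}" using FB(2) .
  have dist: "distinct (comb m2 A B)"
    unfolding comb_def using sH dH sL FB(3) m2 by auto
  have set: "set (comb m2 A B) = {1..m1 + m2}"
    unfolding comb_def using sH sL m1 m2 by auto
  have av: "av213 (comb m2 A B)"
  proof -
    have "av213 (tl A)" using FA(4) .
    then have "av213 ?H" by (subst av_map) auto
    then have "av213 (Suc m2 # ?H)" using sH by (subst av_Cons_min) auto
    moreover have "av213 ?L" using FB(4) .
    ultimately have "av213 ((Suc m2 # ?H) @ ?L)" using sH sL by (subst av_app_above) auto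
    then show ?thesis unfolding comb_def using sH sL m2 by (subst av_Cons_min) auto
  qed
  show ?thesis unfolding TT_def using dist set av by (simp add: comb_def)
qed

lemma comb_inj:
  assumes A: "A \<in> TT m1" and B: "B \<in> TT m2" and m1: "1 \<le> m1" and m2: "1 \<le> m2"
    and A': "A' \<in> TT m1'" and B': "B' \<in> TT m2" and m1': "1 \<le> m1'"
    and eq: "comb m2 A B = comb m2 A' B'"
  shows "A = A' \<and> B = B'"
proof -
  note FA = TT_facts[OF A m1] and FB = TT_facts[OF B m2]
  note FA' = TT_facts[OF A' m1'] and FB' = TT_facts[OF B' m2]
  have e: "map (\<lambda>x. x + m2) (tl A) @ tl B = map (\<lambda>x. x + m2) (tl A') @ tl B'"
    using eq unfolding comb_def by simp
  have "length (tl B) = length (tl B')" using FB(5) FB'(5) by simp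
  then have "map (\<lambda>x. x + m2) (tl A) = map (\<lambda>x. x + m2) (tl A') \<and> tl B = tl B'"
    using e by (simp add: append_eq_append_conv)
  moreover have "inj (\<lambda>x::nat. x + m2)" by (simp add: inj_on_def)
  ultimately have "tl A = tl A'" "tl B = tl B'" by (auto simp: inj_map_eq_map)
  then show ?thesis using FA(1) FA'(1) FB(1) FB'(1) by metis
qed

lemma TT_decomp:
  assumes c: "c \<in> TT n" and n: "2 \<le> n"
  shows "\<exists>m2 A B. 1 \<le> m2 \<and> m2 < n \<and> A \<in> TT (n - m2) \<and> B \<in> TT m2 \<and> c = comb m2 A B"
proof -
  have n1: "1 \<le> n" using n by simp
  note Fc = TT_facts[OF c n1]
  have c1: "c = 1 # tl c" and stl: "set (tl c) = {2..n}" and dtl: "distinct (tl c)"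
    and avtl: "av213 (tl c)" and ltl: "length (tl c) = n - 1"
    by (rule Fc(1), rule Fc(2), rule Fc(3), rule Fc(4), rule Fc(5))
  obtain a r where ar: "tl c = a # r" using ltl n by (cases "tl c") auto
  have a: "a \<in> {2..n}" using stl ar by auto
  have anr: "a \<notin> set r" using dtl ar by simp
  have dr: "distinct r" using dtl ar by simp
  have sr: "set r = {2..n} - {a}" using stl ar anr by auto
  have avar: "av213 (a # r)" using avtl ar by simp
  have avr: "av213 r" using avar av_tl by blast
  have noyz: "\<not> (\<exists>y z. subseq [y,z] r \<and> y < a \<and> a < z)"
  proof
    assume "\<exists>y z. subseq [y,z] r \<and> y < a \<and> a < z"
    then obtain y z where yz: "subseq [y,z] r" "y < a" "a < z" by blast
    then have "subseq [a,y,z] (a # r)" by simp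
    then show False using avar yz unfolding av213_def by blast
  qed
  define H where "H = filter (\<lambda>x. a < x) r"
  define L where "L = filter (\<lambda>x. x < a) r"
  have rHL: "r = H @ L" unfolding H_def L_def by (rule split_above_below[OF noyz anr])
  have sH: "set H = {a + 1..n}"
  proof -
    have "set H = {x \<in> {2..n} - {a}. a < x}" unfolding H_def using sr by auto
    also have "\<dots> = {a + 1..n}" using a by force
    finally show ?thesis .
  qed
  have sL: "set L = {2..a - 1}"
  proof -
    have "set L = {x \<in> {2..n} - {a}. x < a}" unfolding L_def using sr by auto
    also have "\<dots> = {2..a - 1}" using a by force
    finally show ?thesis .
  qed
  have dH: "distinct H" "distinct L" using dr rHL by auto
  have avH: "av213 H" using avr rHL av_app1 by blast
  have avL: "av213 L" using avr rHL av_app2 by blast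
  define m2 where "m2 = a - 1"
  define A where "A = 1 # map (\<lambda>x. x - m2) H"
  define B where "B = 1 # L"
  have m2: "1 \<le> m2" "m2 < n" using a unfolding m2_def by auto
  have smH: "set (map (\<lambda>x. x - m2) H) = {2..n - m2}"
  proof -
    have "set (map (\<lambda>x. x - m2) H) = (\<lambda>x. x - m2) ` {a+1..n}" using sH by simp
    also have "\<dots> = {a + 1 - m2..n - m2}"
      by (rule image_minus_interval) (use a in \<open>auto simp: m2_def\<close>)
    also have "a + 1 - m2 = 2" using a by (simp add: m2_def)
    finally show ?thesis .
  qed
  have injH: "inj_on (\<lambda>x. x - m2) (set H)" using sH unfolding m2_def by (auto simp: inj_on_def)
  have A_TT: "A \<in> TT (n - m2)"
  proof -
    have "distinct (map (\<lambda>x. x - m2) H)" using dH injH by (simp add: distinct_map)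
    moreover have "1 \<notin> set (map (\<lambda>x. x - m2) H)" using smH by auto
    moreover have "av213 (map (\<lambda>x. x - m2) H)"
      using avH sH by (subst av_map) (auto simp: m2_def)
    moreover have "av213 A" unfolding A_def using calculation smH by (subst av_Cons_min) auto
    ultimately show ?thesis unfolding TT_def A_def using smH m2 by auto
  qed
  have B_TT: "B \<in> TT m2"
  proof -
    have "av213 B" unfolding B_def using avL sL by (subst av_Cons_min) auto
    then show ?thesis unfolding TT_def B_def using sL dH a by (auto simp: m2_def)
  qed
  have "map (\<lambda>x. x + m2) (map (\<lambda>x. x - m2) H) = H"
  proof -
    have "map (\<lambda>x. x + m2) (map (\<lambda>x. x - m2) H) = map (\<lambda>x. x - m2 + m2) H" by simp
    also have "\<dots> = map (\<lambda>x. x) H"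
    proof (rule map_cong)
      fix x assume "x \<in> set H"
      then have "m2 \<le> x" using sH by (auto simp: m2_def)
      then show "x - m2 + m2 = x" by simp
    qed simp
    finally show ?thesis by simp
  qed
  moreover have cc: "c = 1 # a # H @ L"
  proof -
    have "c = 1 # tl c" by (rule c1)
    also have "\<dots> = 1 # a # H @ L" by (simp add: ar rHL)
    finally show ?thesis .
  qed
  ultimately have "comb m2 A B = c" unfolding comb_def A_def B_def using a
    by (simp add: m2_def)
  then show ?thesis using m2 A_TT B_TT by blast
qed

lemma nxt_pair: "distinct c \<Longrightarrow> c = u @ x # y # w \<Longrightarrow> nxt c x = y"
  using nxt_mid by blast

lemma nxt_end: "distinct c \<Longrightarrow> c = u @ [x] \<Longrightarrow> nxt c x = hd c"
  using nxt_last by blast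

lemma succ_in_list:
  assumes "x \<in> set l"
  shows "(\<exists>u y w. l = u @ x # y # w) \<or> (\<exists>u. l = u @ [x])"
proof -
  obtain u w where l: "l = u @ x # w" using split_list[OF assms] by blast
  show ?thesis
  proof (cases w)
    case Nil then show ?thesis using l by blast
  next
    case (Cons y w') then show ?thesis using l by blast
  qed
qed

lemma upt_shift: "map (\<lambda>j. j + k) [a..<b] = [a + k..<b + (k::nat)]"
  by (induct b) auto

lemma TT1: "X \<in> TT 1 \<Longrightarrow> X = [1]"
proof -
  assume X: "X \<in> TT 1"
  have X1: "X = 1 # tl X" using TT_facts(1)[OF X] by simp
  have "length (tl X) = 1 - 1" using TT_facts(5)[OF X] by simp
  then have "tl X = []" by (simp only: diff_self_eq_0 length_0_conv)
  then show ?thesis using X1 by metis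
qed

lemma ol_len: "length (ol X) = length X"
  unfolding ol_def length_map length_upt by simp

lemma ol_facts:
  assumes X: "X \<in> TT m" and m: "1 \<le> m"
  shows "set (ol X) = {1..m}" "distinct (ol X)" "ol X \<noteq> []" "hd (ol X) = nxt X 1"
    "length (ol X) = m"
proof -
  have d: "distinct X" and s: "set X = {1..m}" using X unfolding TT_def by auto
  have len: "length X = m" using TT_length[OF X] .
  have ne: "X \<noteq> []" using len m by auto
  have p: "nxt X permutes {1..m}" using nxt_permutes[OF d s ne] .
  have ol: "ol X = map (nxt X) [1..<Suc m]" unfolding ol_def using len by simp
  have "set (ol X) = nxt X ` {1..m}" unfolding ol by auto
  also have "\<dots> = {1..m}" using permutes_image[OF p] .
  finally show "set (ol X) = {1..m}" .
  have inj: "inj_on (nxt X) {1..m}" using permutes_inj_on[OF p] .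
  have su: "set [1..<Suc m] = {1..m}" by auto
  show "distinct (ol X)" unfolding ol distinct_map su using inj by simp
  show "ol X \<noteq> []" unfolding ol using m by simp
  show "hd (ol X) = nxt X 1" unfolding ol using m by (simp add: upt_conv_Cons del: upt_Suc)
  show "length (ol X) = m" unfolding ol by simp
qed

lemma nxt_B1:
  assumes B: "B \<in> TT m2" and m2: "1 \<le> m2"
  shows "nxt B 1 = (if tl B = [] then 1 else hd (tl B))"
proof -
  have B1: "B = 1 # tl B" using TT_facts[OF B m2] by blast
  have d: "distinct B" using B unfolding TT_def by auto
  show ?thesis
  proof (cases "tl B")
    case Nil
    then have "B = [] @ [1]" using B1 by simp
    then have "nxt B 1 = hd B" using nxt_end[OF d] by blast
    then show ?thesis using Nil B1 by simp
  next
    case (Cons y w)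
    then have "B = [] @ 1 # y # w" using B1 by simp
    then have "nxt B 1 = y" using nxt_pair[OF d] by blast
    then show ?thesis using Cons by simp
  qed
qed

definition tau :: "nat \<Rightarrow> nat \<Rightarrow> nat \<Rightarrow> nat" where
  "tau h m2 v = (if v = 1 then h else v + m2)"

lemma comb_nxt:
  assumes A: "A \<in> TT m1" and B: "B \<in> TT m2" and m1: "1 \<le> m1" and m2: "1 \<le> m2"
  shows "nxt (comb m2 A B) 1 = Suc m2"
    "\<And>x. x \<in> set (tl B) \<Longrightarrow> nxt (comb m2 A B) x = nxt B x"
    "\<And>j. j \<in> {1..m1} \<Longrightarrow> nxt (comb m2 A B) (j + m2) = tau (nxt B 1) m2 (nxt A j)"
proof -
  let ?c = "comb m2 A B"
  let ?H = "map (\<lambda>x. x + m2) (tl A)"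
  let ?L = "tl B"
  have dc: "distinct ?c" using comb_TT[OF A B m1 m2] unfolding TT_def by auto
  have c: "?c = 1 # Suc m2 # ?H @ ?L" unfolding comb_def by simp
  note FA = TT_facts[OF A m1] and FB = TT_facts[OF B m2]
  have dA: "distinct A" and dB: "distinct B" using A B unfolding TT_def by auto
  have nB1: "nxt B 1 = (if ?L = [] then 1 else hd ?L)" by (rule nxt_B1[OF B m2])
  show "nxt ?c 1 = Suc m2" using nxt_pair[OF dc, of "[]"] c by simp
  show "nxt ?c x = nxt B x" if x: "x \<in> set ?L" for x
  proof -
    from succ_in_list[OF x] show ?thesis
    proof
      assume "\<exists>u y w. ?L = u @ x # y # w"
      then obtain u y w where L: "?L = u @ x # y # w" by blast
      have "?c = (1 # Suc m2 # ?H @ u) @ x # y # w" using c L by simp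
      then have "nxt ?c x = y" using nxt_pair[OF dc] by blast
      moreover have "B = (1 # u) @ x # y # w" using FB(1) L by simp
      then have "nxt B x = y" using nxt_pair[OF dB] by blast
      ultimately show ?thesis by simp
    next
      assume "\<exists>u. ?L = u @ [x]"
      then obtain u where L: "?L = u @ [x]" by blast
      have "?c = (1 # Suc m2 # ?H @ u) @ [x]" using c L by simp
      then have "nxt ?c x = 1" using nxt_end[OF dc] by fastforce
      moreover have "B = (1 # u) @ [x]" using FB(1) L by simp
      then have "nxt B x = 1" using nxt_end[OF dB] by fastforce
      ultimately show ?thesis by simp
    qed
  qed
  show "nxt ?c (j + m2) = tau (nxt B 1) m2 (nxt A j)" if j: "j \<in> {1..m1}" for j
  proof (cases "j = 1")
    case True
    show ?thesis
    proof (cases "tl A")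
      case Nil
      then have "A = [] @ [1]" using FA(1) by simp
      then have nA: "nxt A 1 = 1" using nxt_end[OF dA] by fastforce
      show ?thesis
      proof (cases ?L)
        case Nil
        then have "?c = [1] @ [Suc m2]" using c \<open>tl A = []\<close> by simp
        then have "nxt ?c (Suc m2) = 1" using nxt_end[OF dc] by fastforce
        then show ?thesis using True nA nB1 Nil by (simp add: tau_def)
      next
        case (Cons y w)
        then have "?c = [1] @ Suc m2 # y # w" using c \<open>tl A = []\<close> by simp
        then have "nxt ?c (Suc m2) = y" using nxt_pair[OF dc] by blast
        then show ?thesis using True nA nB1 Cons by (simp add: tau_def)
      qed
    next
      case (Cons t ts)
      then have "A = [] @ 1 # t # ts" using FA(1) by simp
      then have nA: "nxt A 1 = t" using nxt_pair[OF dA] by blast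
      have t1: "t \<noteq> 1" using dA \<open>A = [] @ 1 # t # ts\<close> by auto
      have "?c = [1] @ Suc m2 # (t + m2) # map (\<lambda>x. x + m2) ts @ ?L" using c Cons by simp
      then have "nxt ?c (Suc m2) = t + m2" using nxt_pair[OF dc] by blast
      then show ?thesis using True nA t1 by (simp add: tau_def)
    qed
  next
    case False
    then have jt: "j \<in> set (tl A)" using j FA(2) by auto
    from succ_in_list[OF jt] show ?thesis
    proof
      assume "\<exists>u y w. tl A = u @ j # y # w"
      then obtain u k w where tA: "tl A = u @ j # k # w" by blast
      have "A = (1 # u) @ j # k # w" using FA(1) tA by simp
      then have nA: "nxt A j = k" using nxt_pair[OF dA] by blast
      have k1: "k \<noteq> 1" using dA \<open>A = (1 # u) @ j # k # w\<close> by auto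
      have "?c = (1 # Suc m2 # map (\<lambda>x. x + m2) u) @ (j + m2) # (k + m2) # (map (\<lambda>x. x + m2) w @ ?L)"
        using c tA by simp
      then have "nxt ?c (j + m2) = k + m2" using nxt_pair[OF dc] by blast
      then show ?thesis using nA k1 by (simp add: tau_def)
    next
      assume "\<exists>u. tl A = u @ [j]"
      then obtain u where tA: "tl A = u @ [j]" by blast
      have "A = (1 # u) @ [j]" using FA(1) tA by simp
      then have nA: "nxt A j = 1" using nxt_end[OF dA] by fastforce
      show ?thesis
      proof (cases ?L)
        case Nil
        then have "?c = (1 # Suc m2 # map (\<lambda>x. x + m2) u) @ [j + m2]" using c tA by simp
        then have "nxt ?c (j + m2) = 1" using nxt_end[OF dc] by fastforce
        then show ?thesis using nA nB1 Nil by (simp add: tau_def)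
      next
        case (Cons y w)
        then have "?c = (1 # Suc m2 # map (\<lambda>x. x + m2) u) @ (j + m2) # y # w" using c tA by simp
        then have "nxt ?c (j + m2) = y" using nxt_pair[OF dc] by blast
        then show ?thesis using nA nB1 Cons by (simp add: tau_def)
      qed
    qed
  qed
qed

lemma comb_ol:
  assumes A: "A \<in> TT m1" and B: "B \<in> TT m2" and m1: "1 \<le> m1" and m2: "1 \<le> m2"
  shows "ol (comb m2 A B) = Suc m2 # tl (ol B) @ map (tau (hd (ol B)) m2) (ol A)"
proof -
  let ?c = "comb m2 A B"
  note N = comb_nxt[OF A B m1 m2]
  have lc: "length ?c = m1 + m2" using TT_length[OF comb_TT[OF A B m1 m2]] .
  have lA: "length A = m1" and lB: "length B = m2" using TT_length A B by auto
  have hB: "hd (ol B) = nxt B 1" using ol_facts[OF B m2] by simp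
  have e0: "[1..<Suc m2] = 1 # [Suc 1..<Suc m2]" using m2 by (intro upt_conv_Cons) simp
  have e: "[1..<Suc m2] = 1 # [2..<Suc m2]" using e0 by (simp only: Suc_1)
  have u: "[1..<Suc (m1 + m2)] = 1 # [2..<Suc m2] @ map (\<lambda>j. j + m2) [1..<Suc m1]"
  proof -
    have "[1..<Suc (m1 + m2)] = [1..<Suc m2] @ [Suc m2..<Suc (m1 + m2)]"
      using upt_add_eq_append[of 1 "Suc m2" m1] by (simp add: add.commute)
    also have "[1..<Suc m2] = 1 # [2..<Suc m2]" by (rule e)
    also have "[Suc m2..<Suc (m1 + m2)] = map (\<lambda>j. j + m2) [1..<Suc m1]"
      by (simp add: upt_shift)
    finally show ?thesis by simp
  qed
  have p1: "map (nxt ?c) [2..<Suc m2] = map (nxt B) [2..<Suc m2]"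
  proof (rule map_cong)
    fix x assume "x \<in> set [2..<Suc m2]"
    then have "x \<in> set (tl B)" using TT_facts(2)[OF B m2] by auto
    then show "nxt ?c x = nxt B x" by (rule N(2))
  qed simp
  have p2: "map (nxt ?c) (map (\<lambda>j. j + m2) [1..<Suc m1]) = map (tau (hd (ol B)) m2) (ol A)"
  proof -
    have "map (nxt ?c) (map (\<lambda>j. j + m2) [1..<Suc m1]) = map (\<lambda>j. nxt ?c (j + m2)) [1..<Suc m1]"
      by simp
    also have "\<dots> = map (\<lambda>j. tau (hd (ol B)) m2 (nxt A j)) [1..<Suc m1]"
    proof (rule map_cong)
      fix j assume "j \<in> set [1..<Suc m1]"
      then have "j \<in> {1..m1}" by auto
      then show "nxt ?c (j + m2) = tau (hd (ol B)) m2 (nxt A j)" using N(3) hB by simp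
    qed simp
    also have "\<dots> = map (tau (hd (ol B)) m2) (ol A)" unfolding ol_def lA by simp
    finally show ?thesis .
  qed
  have tB: "tl (ol B) = map (nxt B) [2..<Suc m2]" unfolding ol_def lB e by simp
  show ?thesis unfolding ol_def[of ?c] lc u using N(1) p1 p2 tB by simp
qed

definition sg :: "nat \<Rightarrow> nat" where "sg v = (if v \<le> 1 then v else Suc v)"
definition rl :: "nat \<Rightarrow> nat \<Rightarrow> nat \<Rightarrow> nat \<Rightarrow> nat" where
  "rl p q r w = (if w = 1 then p else if w = 2 then q else w + r)"

definition ff :: "nat list \<Rightarrow> nat" where "ff X = ld (ol X)"
definition gg :: "nat list \<Rightarrow> nat" where "gg X = ld (rotate1 (ol X))"
definition g1 :: "nat list \<Rightarrow> nat" where "g1 X = ld (map sg (ol X) @ [2])"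
definition g2 :: "nat list \<Rightarrow> nat" where "g2 X = ld (map sg (rotate1 (ol X)) @ [2])"

lemma rl_mono: "p < q \<Longrightarrow> q < 3 + r \<Longrightarrow> 1 \<le> x \<Longrightarrow> x < y \<Longrightarrow> rl p q r x < rl p q r y"
  unfolding rl_def by auto

lemma sg_mono: "x < y \<Longrightarrow> sg x < sg y"
  unfolding sg_def by auto

lemma rotate1_tl: "l \<noteq> [] \<Longrightarrow> rotate1 l = tl l @ [hd l]"
  by (cases l) auto

lemma filter_single: "distinct l \<Longrightarrow> x \<in> set l \<Longrightarrow> filter (\<lambda>v. v = x) l = [x]"
proof (induction l)
  case Nil then show ?case by simp
next
  case (Cons a l)
  show ?case
  proof (cases "a = x")
    case True
    then have "x \<notin> set l" using Cons.prems by simp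
    then have "filter (\<lambda>v. v = x) l = []" by (auto simp: filter_empty_conv)
    then show ?thesis using True by simp
  next
    case False
    then show ?thesis using Cons by simp
  qed
qed

lemma filter_map_single:
  assumes "distinct l" "x \<in> set l" "\<forall>v\<in>set l. P (h v) \<longleftrightarrow> v = x"
  shows "filter P (map h l) = [h x]"
proof -
  have "filter P (map h l) = map h (filter (P \<circ> h) l)" by (simp add: filter_map)
  also have "filter (P \<circ> h) l = filter (\<lambda>v. v = x) l"
    using assms(3) by (intro filter_cong) auto
  also have "\<dots> = [x]" using assms(1,2) by (rule filter_single)
  finally show ?thesis by simp
qed

lemma ff_relabel:
  assumes X: "X \<in> TT m" and m: "1 \<le> m" and h: "\<forall>v w. 1 \<le> v \<longrightarrow> v < w \<longrightarrow> h v < h w"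
  shows "ld (map h (ol X)) = ff X"
  unfolding ff_def
proof (rule ld_relabel)
  show "\<forall>a\<in>set (ol X). \<forall>b\<in>set (ol X). a < b \<longrightarrow> h a < h b"
    using h ol_facts(1)[OF X m] by auto
qed

lemma g1_relabel:
  assumes X: "X \<in> TT m" and m: "1 \<le> m" and pq: "p < q" "q < 3 + r"
  shows "ld (map (\<lambda>v. if v = 1 then p else v + 1 + r) (ol X) @ [q]) = g1 X"
proof -
  have s: "set (ol X) = {1..m}" using ol_facts(1)[OF X m] .
  have "map (\<lambda>v. if v = 1 then p else v + 1 + r) (ol X) @ [q] = map (rl p q r) (map sg (ol X) @ [2])"
  proof -
    have "map (\<lambda>v. if v = 1 then p else v + 1 + r) (ol X) = map (\<lambda>v. rl p q r (sg v)) (ol X)"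
    proof (rule map_cong)
      fix v assume "v \<in> set (ol X)"
      then have "1 \<le> v" using s by auto
      then show "(if v = 1 then p else v + 1 + r) = rl p q r (sg v)"
        unfolding rl_def sg_def by auto
    qed simp
    then show ?thesis by (simp add: rl_def)
  qed
  also have "ld \<dots> = ld (map sg (ol X) @ [2])"
  proof (rule ld_relabel)
    have "\<forall>a\<in>set (map sg (ol X) @ [2]). 1 \<le> a" using s by (auto simp: sg_def)
    then show "\<forall>a\<in>set (map sg (ol X) @ [2]). \<forall>b\<in>set (map sg (ol X) @ [2]). a < b \<longrightarrow> rl p q r a < rl p q r b"
      using rl_mono[OF pq] by blast
  qed
  finally show ?thesis unfolding g1_def .
qed

lemma comb_basic:
  assumes A: "A \<in> TT m1" and B: "B \<in> TT m2" and m1: "1 \<le> m1" and m2: "1 \<le> m2"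
  defines "hb \<equiv> hd (ol B)"
  shows "set (ol A) = {1..m1}" "distinct (ol A)" "hb \<in> {1..m2}" "\<forall>x\<in>set (tl (ol B)). 1 \<le> x \<and> x \<le> m2"
    "rotate1 (ol B) = tl (ol B) @ [hb]"
    "ol (comb m2 A B) = Suc m2 # tl (ol B) @ map (tau hb m2) (ol A)"
    "rotate1 (ol (comb m2 A B)) = tl (ol B) @ map (tau hb m2) (ol A) @ [Suc m2]"
    "m2 = 1 \<Longrightarrow> ol B = [1]"
    "2 \<le> m2 \<Longrightarrow> 2 \<le> hb"
    "filter (\<lambda>y. y < Suc m2) (map (tau hb m2) (ol A)) = [hb]"
    "\<forall>v w. 1 \<le> v \<longrightarrow> v < w \<longrightarrow> tau hb m2 v < tau hb m2 w"
proof -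
  note OA = ol_facts[OF A m1] and OB = ol_facts[OF B m2]
  show sA: "set (ol A) = {1..m1}" by (rule OA(1))
  show "distinct (ol A)" by (rule OA(2))
  have hbin: "hb \<in> set (ol B)" unfolding hb_def using OB(3) by simp
  then show hb: "hb \<in> {1..m2}" using OB(1) by simp
  have "set (tl (ol B)) \<subseteq> set (ol B)" by (simp add: list.set_sel(2) subsetI OB(3))
  then show "\<forall>x\<in>set (tl (ol B)). 1 \<le> x \<and> x \<le> m2" using OB(1) by auto
  show "rotate1 (ol B) = tl (ol B) @ [hb]" unfolding hb_def using OB(3) by (rule rotate1_tl)
  show oc: "ol (comb m2 A B) = Suc m2 # tl (ol B) @ map (tau hb m2) (ol A)"
    unfolding hb_def by (rule comb_ol[OF A B m1 m2])
  show "rotate1 (ol (comb m2 A B)) = tl (ol B) @ map (tau hb m2) (ol A) @ [Suc m2]"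
    unfolding oc by simp
  show "ol B = [1]" if "m2 = 1"
  proof -
    have "B = [1]" using TT1 B that by simp
    then show ?thesis unfolding ol_def by (simp add: nxt_def)
  qed
  show "2 \<le> hb" if "2 \<le> m2"
  proof -
    have e: "hb = (if tl B = [] then 1 else hd (tl B))"
      unfolding hb_def using OB(4) nxt_B1[OF B m2] by simp
    have "length (tl B) = m2 - 1" by (rule TT_facts(5)[OF B m2])
    then have "0 < length (tl B)" using that by simp
    then have ne: "tl B \<noteq> []" by (cases "tl B") simp_all
    then have "hd (tl B) \<in> set (tl B)" by simp
    then have "hd (tl B) \<in> {2..m2}" using TT_facts(2)[OF B m2] by simp
    then show ?thesis using e ne by simp
  qed
  show "filter (\<lambda>y. y < Suc m2) (map (tau hb m2) (ol A)) = [hb]"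
  proof -
    have "filter (\<lambda>y. y < Suc m2) (map (tau hb m2) (ol A)) = [tau hb m2 1]"
    proof (rule filter_map_single)
      show "distinct (ol A)" by (rule OA(2))
      show "1 \<in> set (ol A)" using sA m1 by simp
      show "\<forall>v\<in>set (ol A). (tau hb m2 v < Suc m2) = (v = 1)"
        using sA hb by (auto simp: tau_def)
    qed
    then show ?thesis by (simp add: tau_def)
  qed
  show "\<forall>v w. 1 \<le> v \<longrightarrow> v < w \<longrightarrow> tau hb m2 v < tau hb m2 w"
    using hb by (auto simp: tau_def)
qed

lemma ld_inc2: "x < y \<Longrightarrow> ld [x, y] = 1"
proof -
  assume xy: "x < y"
  have "ld ([x] @ [y]) = max (ld [y]) (ld ([x] @ filter (\<lambda>_. False) [y]))"
    by (rule ld_split) (use xy in simp)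
  then show ?thesis by simp
qed

lemma R1:
  assumes A: "A \<in> TT m1" and B: "B \<in> TT m2" and m1: "1 \<le> m1" and m2: "1 \<le> m2"
  shows "ff (comb m2 A B) = max (ff A) (Suc (gg B))"
proof -
  define hb where "hb = hd (ol B)"
  note F = comb_basic[OF A B m1 m2, folded hb_def]
  let ?t = "tau hb m2"
  have "ff (comb m2 A B) = ld ((Suc m2 # tl (ol B)) @ map ?t (ol A))"
    unfolding ff_def F(6) by simp
  also have "\<dots> = max (ld (map ?t (ol A)))
      (ld ((Suc m2 # tl (ol B)) @ filter (\<lambda>y. y < Suc m2) (map ?t (ol A))))"
  proof (rule ld_split)
    show "\<forall>y\<in>set (map ?t (ol A)). \<not> y < Suc m2 \<longrightarrow> (\<forall>x\<in>set (Suc m2 # tl (ol B)). x < y)"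
    proof (intro ballI impI)
      fix y x assume y: "y \<in> set (map ?t (ol A))" and ny: "\<not> y < Suc m2"
        and x: "x \<in> set (Suc m2 # tl (ol B))"
      obtain v where v: "v \<in> set (ol A)" "y = ?t v" using y by auto
      have "v \<noteq> 1" using v ny F(3) by (auto simp: tau_def)
      then have "Suc (Suc m2) \<le> y" using v F(1) by (auto simp: tau_def)
      moreover have "x \<le> Suc m2" using x F(4) by auto
      ultimately show "x < y" by simp
    qed
  qed
  also have "filter (\<lambda>y. y < Suc m2) (map ?t (ol A)) = [hb]" by (rule F(10))
  also have "ld ((Suc m2 # tl (ol B)) @ [hb]) = Suc (ld (tl (ol B) @ [hb]))"
    using ld_Cons_big[of "tl (ol B) @ [hb]" "Suc m2"] F(3) F(4) by fastforce
  also have "tl (ol B) @ [hb] = rotate1 (ol B)" using F(5) by simp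
  also have "ld (map ?t (ol A)) = ff A" by (rule ff_relabel[OF A m1 F(11)])
  finally show ?thesis unfolding gg_def .
qed

lemma R2:
  assumes A: "A \<in> TT m1" and B: "B \<in> TT m2" and m1: "1 \<le> m1" and m2: "1 \<le> m2"
  shows "gg (comb m2 A B) = max (g1 A) (gg B)"
proof -
  define hb where "hb = hd (ol B)"
  note F = comb_basic[OF A B m1 m2, folded hb_def]
  let ?t = "tau hb m2"
  have "gg (comb m2 A B) = ld (tl (ol B) @ (map ?t (ol A) @ [Suc m2]))"
    unfolding gg_def F(7) by simp
  also have "\<dots> = max (ld (map ?t (ol A) @ [Suc m2]))
      (ld (tl (ol B) @ filter (\<lambda>y. y < Suc m2) (map ?t (ol A) @ [Suc m2])))"
  proof (rule ld_split)
    show "\<forall>y\<in>set (map ?t (ol A) @ [Suc m2]). \<not> y < Suc m2 \<longrightarrow> (\<forall>x\<in>set (tl (ol B)). x < y)"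
      using F(4) by fastforce
  qed
  also have "filter (\<lambda>y. y < Suc m2) (map ?t (ol A) @ [Suc m2]) = [hb]" using F(10) by simp
  also have "tl (ol B) @ [hb] = rotate1 (ol B)" using F(5) by simp
  also have "map ?t (ol A) = map (\<lambda>v. if v = 1 then hb else v + 1 + (m2 - 1)) (ol A)"
    using m2 by (intro map_cong) (auto simp: tau_def)
  also have "ld (map (\<lambda>v. if v = 1 then hb else v + 1 + (m2 - 1)) (ol A) @ [Suc m2]) = g1 A"
    by (rule g1_relabel[OF A m1]) (use F(3) m2 in auto)
  finally show ?thesis unfolding gg_def .
qed

lemma R3a:
  assumes A: "A \<in> TT m1" and B: "B \<in> TT m2" and m1: "1 \<le> m1" and m2: "2 \<le> m2"
  shows "g1 (comb m2 A B) = Suc (max (ff A) (g2 B))"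
proof -
  have m2': "1 \<le> m2" using m2 by simp
  define hb where "hb = hd (ol B)"
  note F = comb_basic[OF A B m1 m2', folded hb_def]
  have hb2: "2 \<le> hb" using F(9) m2 by simp
  let ?t = "tau hb m2"
  let ?s = "\<lambda>v. sg (?t v)"
  have sgm: "sg (Suc m2) = Suc (Suc m2)" using m2 by (simp add: sg_def)
  have "g1 (comb m2 A B) = ld ((Suc (Suc m2) # map sg (tl (ol B))) @ (map ?s (ol A) @ [2]))"
    unfolding g1_def F(6) using sgm by (simp add: comp_def)
  also have "\<dots> = max (ld (map ?s (ol A) @ [2]))
      (ld ((Suc (Suc m2) # map sg (tl (ol B))) @ filter (\<lambda>y. y < Suc (Suc m2)) (map ?s (ol A) @ [2])))"
  proof (rule ld_split)
    show "\<forall>y\<in>set (map ?s (ol A) @ [2]). \<not> y < Suc (Suc m2) \<longrightarrow>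
            (\<forall>x\<in>set (Suc (Suc m2) # map sg (tl (ol B))). x < y)"
    proof (intro ballI impI)
      fix y x assume y: "y \<in> set (map ?s (ol A) @ [2])" and ny: "\<not> y < Suc (Suc m2)"
        and x: "x \<in> set (Suc (Suc m2) # map sg (tl (ol B)))"
      have "y \<noteq> 2" using ny m2 by auto
      then obtain v where v: "v \<in> set (ol A)" "y = ?s v" using y by auto
      have "v \<noteq> 1" using v ny F(3) by (auto simp: tau_def sg_def split: if_splits)
      then have "Suc (Suc (Suc m2)) \<le> y" using v F(1) by (auto simp: tau_def sg_def)
      moreover have "x \<le> Suc (Suc m2)" using x F(4) by (auto simp: sg_def)
      ultimately show "x < y" by simp
    qed
  qed
  also have "filter (\<lambda>y. y < Suc (Suc m2)) (map ?s (ol A) @ [2]) = [sg hb, 2]"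
  proof -
    have "filter (\<lambda>y. y < Suc (Suc m2)) (map ?s (ol A)) = [?s 1]"
    proof (rule filter_map_single)
      show "distinct (ol A)" by (rule F(2))
      show "1 \<in> set (ol A)" using F(1) m1 by simp
      show "\<forall>v\<in>set (ol A). (?s v < Suc (Suc m2)) = (v = 1)"
        using F(1) F(3) by (auto simp: tau_def sg_def)
    qed
    then show ?thesis using m2 by (simp add: tau_def)
  qed
  also have "ld ((Suc (Suc m2) # map sg (tl (ol B))) @ [sg hb, 2]) =
      Suc (ld (map sg (tl (ol B)) @ [sg hb, 2]))"
  proof -
    have "\<forall>y\<in>set (map sg (tl (ol B)) @ [sg hb, 2]). y < Suc (Suc m2)"
      using F(3) F(4) m2 by (auto simp: sg_def)
    then show ?thesis using ld_Cons_big by simp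
  qed
  also have "map sg (tl (ol B)) @ [sg hb, 2] = map sg (rotate1 (ol B)) @ [2]" using F(5) by simp
  also have "ld (map ?s (ol A) @ [2]) = Suc (ld (map ?s (ol A)))"
  proof (rule ld_snoc_small)
    show "\<forall>y\<in>set (map ?s (ol A)). 2 < y" using F(1) hb2 by (auto simp: tau_def sg_def)
  qed
  also have "ld (map ?s (ol A)) = ff A"
  proof (rule ff_relabel[OF A m1])
    show "\<forall>v w. 1 \<le> v \<longrightarrow> v < w \<longrightarrow> ?s v < ?s w" using F(11) sg_mono by blast
  qed
  finally show ?thesis unfolding g2_def by simp
qed

lemma R3b:
  assumes A: "A \<in> TT m1" and B: "B \<in> TT 1" and m1: "1 \<le> m1"
  shows "g1 (comb 1 A B) = max (g1 A) 2"
proof -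
  have m2: "1 \<le> (1::nat)" by simp
  define hb where "hb = hd (ol B)"
  note F = comb_basic[OF A B m1 m2, folded hb_def]
  have oB: "ol B = [1]" using F(8) by simp
  have hb1: "hb = 1" unfolding hb_def oB by simp
  let ?t = "tau 1 1"
  let ?s = "\<lambda>v. sg (?t v)"
  have e1: "sg (Suc 1) = 3" "sg 2 = 3" by (simp_all add: sg_def)
  have "g1 (comb 1 A B) = ld ([3] @ (map ?s (ol A) @ [2]))"
    unfolding g1_def F(6) oB hb1 using e1 by (simp add: comp_def)
  also have "\<dots> = max (ld (map ?s (ol A) @ [2]))
      (ld ([3] @ filter (\<lambda>y. y < 3) (map ?s (ol A) @ [2])))"
  proof (rule ld_split)
    show "\<forall>y\<in>set (map ?s (ol A) @ [2]). \<not> y < 3 \<longrightarrow> (\<forall>x\<in>set [3]. x < y)"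
    proof (intro ballI impI)
      fix y x assume y: "y \<in> set (map ?s (ol A) @ [2])" and ny: "\<not> y < 3" and x: "x \<in> set [3::nat]"
      have "y \<noteq> 2" using ny by auto
      then obtain v where v: "v \<in> set (ol A)" "y = ?s v" using y by auto
      have "v \<noteq> 1" using v ny by (auto simp: tau_def sg_def)
      then have "4 \<le> y" using v F(1) by (auto simp: tau_def sg_def)
      then show "x < y" using x by simp
    qed
  qed
  also have "filter (\<lambda>y. y < 3) (map ?s (ol A) @ [2]) = [1, 2]"
  proof -
    have "filter (\<lambda>y. y < 3) (map ?s (ol A)) = [?s 1]"
    proof (rule filter_map_single)
      show "distinct (ol A)" by (rule F(2))
      show "1 \<in> set (ol A)" using F(1) m1 by simp
      show "\<forall>v\<in>set (ol A). (?s v < 3) = (v = 1)"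
        using F(1) by (auto simp: tau_def sg_def)
    qed
    then show ?thesis by (simp add: tau_def sg_def)
  qed
  also have "ld ([3] @ [1, 2]) = 2"
  proof -
    have "ld ((3::nat) # [1, 2]) = Suc (ld [1, 2])" by (rule ld_Cons_big) simp
    moreover have "ld [1::nat, 2] = 1" by (rule ld_inc2) simp
    ultimately show ?thesis by simp
  qed
  also have "map ?s (ol A) = map (\<lambda>v. if v = 1 then 1 else v + 1 + 1) (ol A)"
    using F(1) by (intro map_cong) (auto simp: tau_def sg_def)
  also have "ld (map (\<lambda>v. if v = 1 then 1 else v + 1 + 1) (ol A) @ [2]) = g1 A"
    by (rule g1_relabel[OF A m1]) auto
  finally show ?thesis .
qed

lemma R4a:
  assumes A: "A \<in> TT m1" and B: "B \<in> TT m2" and m1: "1 \<le> m1" and m2: "2 \<le> m2"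
  shows "g2 (comb m2 A B) = max (Suc (g1 A)) (g2 B)"
proof -
  have m2': "1 \<le> m2" using m2 by simp
  define hb where "hb = hd (ol B)"
  note F = comb_basic[OF A B m1 m2', folded hb_def]
  have hb2: "2 \<le> hb" using F(9) m2 by simp
  let ?t = "tau hb m2"
  let ?s = "\<lambda>v. sg (?t v)"
  have sgm: "sg (Suc m2) = Suc (Suc m2)" using m2 by (simp add: sg_def)
  have "g2 (comb m2 A B) = ld (map sg (tl (ol B)) @ (map ?s (ol A) @ [Suc (Suc m2), 2]))"
    unfolding g2_def F(7) using sgm by (simp add: comp_def)
  also have "\<dots> = max (ld (map ?s (ol A) @ [Suc (Suc m2), 2]))
      (ld (map sg (tl (ol B)) @ filter (\<lambda>y. y < Suc (Suc m2)) (map ?s (ol A) @ [Suc (Suc m2), 2])))"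
  proof (rule ld_split)
    show "\<forall>y\<in>set (map ?s (ol A) @ [Suc (Suc m2), 2]). \<not> y < Suc (Suc m2) \<longrightarrow>
            (\<forall>x\<in>set (map sg (tl (ol B))). x < y)"
    proof (intro ballI impI)
      fix y x assume ny: "\<not> y < Suc (Suc m2)" and x: "x \<in> set (map sg (tl (ol B)))"
      have "x \<le> Suc m2" using x F(4) by (auto simp: sg_def)
      then show "x < y" using ny by simp
    qed
  qed
  also have "filter (\<lambda>y. y < Suc (Suc m2)) (map ?s (ol A) @ [Suc (Suc m2), 2]) = [sg hb, 2]"
  proof -
    have "filter (\<lambda>y. y < Suc (Suc m2)) (map ?s (ol A)) = [?s 1]"
    proof (rule filter_map_single)
      show "distinct (ol A)" by (rule F(2))
      show "1 \<in> set (ol A)" using F(1) m1 by simp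
      show "\<forall>v\<in>set (ol A). (?s v < Suc (Suc m2)) = (v = 1)"
        using F(1) F(3) by (auto simp: tau_def sg_def)
    qed
    then show ?thesis using m2 by (simp add: tau_def)
  qed
  also have "map sg (tl (ol B)) @ [sg hb, 2] = map sg (rotate1 (ol B)) @ [2]" using F(5) by simp
  also have "ld (map ?s (ol A) @ [Suc (Suc m2), 2]) = Suc (ld (map ?s (ol A) @ [Suc (Suc m2)]))"
  proof -
    have "\<forall>y\<in>set (map ?s (ol A) @ [Suc (Suc m2)]). 2 < y" using F(1) hb2 m2 by (auto simp: tau_def sg_def)
    then show ?thesis using ld_snoc_small[of "map ?s (ol A) @ [Suc (Suc m2)]" 2] by simp
  qed
  also have "map ?s (ol A) = map (\<lambda>v. if v = 1 then Suc hb else v + 1 + m2) (ol A)"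
    using hb2 F(1) m2 by (intro map_cong) (auto simp: tau_def sg_def)
  also have "ld (map (\<lambda>v. if v = 1 then Suc hb else v + 1 + m2) (ol A) @ [Suc (Suc m2)]) = g1 A"
    by (rule g1_relabel[OF A m1]) (use F(3) in auto)
  finally show ?thesis unfolding g2_def .
qed

lemma R4b:
  assumes A: "A \<in> TT m1" and B: "B \<in> TT 1" and m1: "1 \<le> m1"
  shows "g2 (comb 1 A B) = Suc (g1 A)"
proof -
  have m2: "1 \<le> (1::nat)" by simp
  define hb where "hb = hd (ol B)"
  note F = comb_basic[OF A B m1 m2, folded hb_def]
  have oB: "ol B = [1]" using F(8) by simp
  have hb1: "hb = 1" unfolding hb_def oB by simp
  let ?t = "tau 1 1"
  let ?s = "\<lambda>v. sg (?t v)"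
  have e1: "sg (Suc 1) = 3" "sg 2 = 3" by (simp_all add: sg_def)
  have "g2 (comb 1 A B) = ld (map ?s (ol A) @ [3, 2])"
    unfolding g2_def F(7) oB hb1 using e1 by (simp add: comp_def)
  also have "\<dots> = Suc (ld (map ?s (ol A) @ [3]))"
  proof (rule ld_snoc2)
    show "(2::nat) < 3" by simp
    show "\<forall>z\<in>set (map ?s (ol A)). 3 < z \<or> z < 2"
    proof
      fix z assume "z \<in> set (map ?s (ol A))"
      then obtain v where v: "v \<in> set (ol A)" "z = ?s v" by auto
      then show "3 < z \<or> z < 2" using F(1) by (cases "v = 1") (auto simp: tau_def sg_def)
    qed
    show "\<forall>z\<in>set (map ?s (ol A)). \<forall>z'\<in>set (map ?s (ol A)). z < 2 \<longrightarrow> z' < 2 \<longrightarrow> z = z'"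
    proof (intro ballI impI)
      fix z z' assume z: "z \<in> set (map ?s (ol A))" and z': "z' \<in> set (map ?s (ol A))"
        and lz: "z < 2" and lz': "z' < 2"
      have "\<forall>w\<in>set (map ?s (ol A)). 1 \<le> w" using F(1) by (auto simp: tau_def sg_def)
      then have "1 \<le> z" "1 \<le> z'" using z z' by blast+
      then show "z = z'" using lz lz' by simp
    qed
  qed
  also have "map ?s (ol A) = map (\<lambda>v. if v = 1 then 1 else v + 1 + 1) (ol A)"
    using F(1) by (intro map_cong) (auto simp: tau_def sg_def)
  also have "ld (map (\<lambda>v. if v = 1 then 1 else v + 1 + 1) (ol A) @ [3]) = g1 A"
    by (rule g1_relabel[OF A m1]) auto
  finally show ?thesis .
qed

lemma TT1_eq: "TT 1 = {[1]}"
proof -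
  have n: "\<not> (\<exists>x y z. subseq [x, y, z] [1::nat] \<and> y < x \<and> x < z)"
  proof
    assume "\<exists>x y z. subseq [x, y, z] [1::nat] \<and> y < x \<and> x < z"
    then obtain x y z where "subseq [x, y, z] [1::nat]" by blast
    then have "length [x, y, z] \<le> length [1::nat]" by (rule list_emb_length)
    then show False by simp
  qed
  have "[1] \<in> TT 1" unfolding TT_def av213_def using n by simp
  then show ?thesis using TT1 by blast
qed

lemma ol_one: "ol [1] = [1]"
  unfolding ol_def by (simp add: nxt_def)

lemma stats_one: "ff [1] = 1" "gg [1] = 1" "g1 [1] = 1"
  unfolding ff_def gg_def g1_def ol_one by (simp_all add: sg_def ld_inc2)

lemma g1_pos: "1 \<le> g1 X"
  unfolding g1_def by (rule ld_pos) simp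

lemma claims:
  assumes "X \<in> TT m" "1 \<le> m"
  shows "1 \<le> gg X \<and> (2 \<le> m \<longrightarrow> 2 \<le> ff X) \<and> (g1 X = Suc (ff X) \<or> (g1 X \<le> 2 \<and> ff X \<le> 2))
         \<and> (2 \<le> m \<longrightarrow> g2 X = Suc (gg X)) \<and> (2 \<le> m \<longrightarrow> 2 \<le> g1 X)"
  using assms
proof (induction m arbitrary: X rule: less_induct)
  case (less m)
  show ?case
  proof (cases "m = 1")
    case True
    then have "X = [1]" using less.prems TT1_eq by auto
    then show ?thesis using True stats_one by simp
  next
    case False
    then have m: "2 \<le> m" using less.prems by simp
    obtain m2 A B where d: "1 \<le> m2" "m2 < m" "A \<in> TT (m - m2)" "B \<in> TT m2" "X = comb m2 A B"
      using TT_decomp[OF less.prems(1) m] by blast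
    define m1 where "m1 = m - m2"
    have m1: "1 \<le> m1" "m1 < m" using d unfolding m1_def by auto
    have A: "A \<in> TT m1" using d unfolding m1_def by simp
    have B: "B \<in> TT m2" using d by simp
    have IA: "1 \<le> gg A \<and> (2 \<le> m1 \<longrightarrow> 2 \<le> ff A) \<and> (g1 A = Suc (ff A) \<or> (g1 A \<le> 2 \<and> ff A \<le> 2))
         \<and> (2 \<le> m1 \<longrightarrow> g2 A = Suc (gg A)) \<and> (2 \<le> m1 \<longrightarrow> 2 \<le> g1 A)"
      using less.IH[OF m1(2) A m1(1)] .
    have IB: "1 \<le> gg B \<and> (2 \<le> m2 \<longrightarrow> 2 \<le> ff B) \<and> (g1 B = Suc (ff B) \<or> (g1 B \<le> 2 \<and> ff B \<le> 2))
         \<and> (2 \<le> m2 \<longrightarrow> g2 B = Suc (gg B)) \<and> (2 \<le> m2 \<longrightarrow> 2 \<le> g1 B)"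
      using less.IH[OF d(2) B d(1)] .
    have r1: "ff X = max (ff A) (Suc (gg B))" using R1[OF A B m1(1) d(1)] d(5) by simp
    have r2: "gg X = max (g1 A) (gg B)" using R2[OF A B m1(1) d(1)] d(5) by simp
    have ffA: "1 \<le> ff A" unfolding ff_def using ol_facts(3)[OF A m1(1)] by (rule ld_pos)
    show ?thesis
    proof (cases "m2 = 1")
      case True
      have B1: "B \<in> TT 1" using B True by simp
      then have "B = [1]" using TT1_eq by auto
      then have ggB: "gg B = 1" using stats_one by simp
      have r3: "g1 X = max (g1 A) 2" using R3b[OF A B1 m1(1)] d(5) True by simp
      have r4: "g2 X = Suc (g1 A)" using R4b[OF A B1 m1(1)] d(5) True by simp
      have ffX: "ff X = max (ff A) 2" using r1 ggB by simp
      have ggX: "gg X = g1 A" using r2 ggB g1_pos[of A] by simp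
      have c3: "g1 X = Suc (ff X) \<or> (g1 X \<le> 2 \<and> ff X \<le> 2)"
      proof (cases "g1 A = Suc (ff A)")
        case True
        then show ?thesis using r3 ffX by (cases "2 \<le> ff A") auto
      next
        case False
        then have "g1 A \<le> 2 \<and> ff A \<le> 2" using IA by blast
        then show ?thesis using r3 ffX by simp
      qed
      show ?thesis using c3 r2 r3 r4 ffX ggX g1_pos[of A] ggB by simp
    next
      case False
      then have m2: "2 \<le> m2" using d(1) by simp
      have r3: "g1 X = Suc (max (ff A) (g2 B))" using R3a[OF A B m1(1) m2] d(5) by simp
      have r4: "g2 X = max (Suc (g1 A)) (g2 B)" using R4a[OF A B m1(1) m2] d(5) by simp
      have g2B: "g2 B = Suc (gg B)" using IB m2 by blast
      have "g1 X = Suc (ff X)" using r3 r1 g2B by simp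
      moreover have "g2 X = Suc (gg X)" using r4 r2 g2B by simp
      moreover have "1 \<le> gg B" using IB by blast
      then have "1 \<le> gg X" using r2 by simp
      moreover have "2 \<le> ff X" using r1 \<open>1 \<le> gg B\<close> by simp
      moreover have "2 \<le> g1 X" using r3 ffA by simp
      ultimately show ?thesis by simp
    qed
  qed
qed

lemma comb_nth1: "comb m2 A B ! 1 = Suc m2"
  unfolding comb_def by simp

lemma card_dec:
  assumes n: "2 \<le> n"
  shows "card {X \<in> TT n. Q X} =
    (\<Sum>m2 = 1..n-1. card {(A,B). A \<in> TT (n - m2) \<and> B \<in> TT m2 \<and> Q (comb m2 A B)})"
proof -
  define S where "S m2 = {(A,B). A \<in> TT (n - m2) \<and> B \<in> TT m2 \<and> Q (comb m2 A B)}" for m2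
  define C where "C m2 = (\<lambda>(A,B). comb m2 A B) ` S m2" for m2
  have eq: "{X \<in> TT n. Q X} = (\<Union>m2\<in>{1..n-1}. C m2)"
  proof
    show "{X \<in> TT n. Q X} \<subseteq> (\<Union>m2\<in>{1..n-1}. C m2)"
    proof
      fix X assume X: "X \<in> {X \<in> TT n. Q X}"
      then obtain m2 A B where d: "1 \<le> m2" "m2 < n" "A \<in> TT (n - m2)" "B \<in> TT m2" "X = comb m2 A B"
        using TT_decomp[OF _ n] by blast
      then have "(A,B) \<in> S m2" using X unfolding S_def by simp
      then have "X \<in> C m2" unfolding C_def using d(5) by force
      moreover have "m2 \<in> {1..n-1}" using d by simp
      ultimately show "X \<in> (\<Union>m2\<in>{1..n-1}. C m2)" by blast
    qed
    show "(\<Union>m2\<in>{1..n-1}. C m2) \<subseteq> {X \<in> TT n. Q X}"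
    proof
      fix X assume "X \<in> (\<Union>m2\<in>{1..n-1}. C m2)"
      then obtain m2 A B where m2: "m2 \<in> {1..n-1}" and AB: "(A,B) \<in> S m2" and X: "X = comb m2 A B"
        unfolding C_def by auto
      have A: "A \<in> TT (n - m2)" and B: "B \<in> TT m2" and Q: "Q (comb m2 A B)" using AB unfolding S_def by auto
      have m1: "1 \<le> n - m2" and m2': "1 \<le> m2" using m2 by auto
      have "comb m2 A B \<in> TT (n - m2 + m2)" by (rule comb_TT[OF A B m1 m2'])
      moreover have "n - m2 + m2 = n" using m2 by auto
      ultimately show "X \<in> {X \<in> TT n. Q X}" using X Q m2 by simp
    qed
  qed
  have finS: "finite (S m2)" for m2
  proof -
    have "S m2 \<subseteq> TT (n - m2) \<times> TT m2" unfolding S_def by auto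
    then show ?thesis using finite_cartesian_product[OF TT_finite TT_finite] finite_subset by blast
  qed
  have cardC: "card (C m2) = card (S m2)" if m2: "m2 \<in> {1..n-1}" for m2
    unfolding C_def
  proof (rule card_image, rule inj_onI)
    fix p q assume p: "p \<in> S m2" and q: "q \<in> S m2" and e: "(case p of (A, B) \<Rightarrow> comb m2 A B) = (case q of (A, B) \<Rightarrow> comb m2 A B)"
    obtain A B where pAB: "p = (A,B)" by (cases p)
    obtain A' B' where qAB: "q = (A',B')" by (cases q)
    have A: "A \<in> TT (n - m2)" and B: "B \<in> TT m2" and A': "A' \<in> TT (n - m2)" and B': "B' \<in> TT m2"
      using p q pAB qAB unfolding S_def by auto
    have ec: "comb m2 A B = comb m2 A' B'" using e pAB qAB by simp
    have m1: "1 \<le> n - m2" and m2': "1 \<le> m2" using m2 by auto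
    have "A = A' \<and> B = B'" by (rule comb_inj[OF A B m1 m2' A' B' m1 ec])
    then show "p = q" using pAB qAB by simp
  qed
  have disj: "\<forall>i\<in>{1..n-1}. \<forall>j\<in>{1..n-1}. i \<noteq> j \<longrightarrow> C i \<inter> C j = {}"
  proof (intro ballI impI)
    fix i j :: nat assume ij: "i \<noteq> j"
    show "C i \<inter> C j = {}"
    proof (rule ccontr)
      assume "C i \<inter> C j \<noteq> {}"
      then obtain X where "X \<in> C i" "X \<in> C j" by blast
      then have "X ! 1 = Suc i" "X ! 1 = Suc j" unfolding C_def using comb_nth1 by auto
      then show False using ij by simp
    qed
  qed
  have "card {X \<in> TT n. Q X} = (\<Sum>m2 = 1..n-1. card (C m2))"
    unfolding eq by (rule card_UN_disjoint) (use finS disj in \<open>auto simp: C_def\<close>)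
  also have "\<dots> = (\<Sum>m2 = 1..n-1. card (S m2))" using cardC by (intro sum.cong) auto
  finally show ?thesis unfolding S_def .
qed

lemma card_prod:
  "card {(A,B). A \<in> S \<and> B \<in> T \<and> P A \<and> R B} = card {A \<in> S. P A} * card {B \<in> T. R B}"
proof -
  have "{(A,B). A \<in> S \<and> B \<in> T \<and> P A \<and> R B} = {A \<in> S. P A} \<times> {B \<in> T. R B}" by auto
  then show ?thesis by (simp add: card_cartesian_product)
qed

definition FF :: "nat \<Rightarrow> nat \<Rightarrow> nat" where "FF n j = card {X \<in> TT n. ff X < j}"
definition GG :: "nat \<Rightarrow> nat \<Rightarrow> nat" where "GG n j = card {X \<in> TT n. gg X < j}"
definition GA :: "nat \<Rightarrow> nat \<Rightarrow> nat" where "GA n j = card {X \<in> TT n. g1 X < j}"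

lemma card_split:
  assumes "\<forall>A\<in>S. \<forall>B\<in>T. Q (comb m2 A B) \<longleftrightarrow> P A \<and> R B"
  shows "card {(A,B). A \<in> S \<and> B \<in> T \<and> Q (comb m2 A B)} = card {A \<in> S. P A} * card {B \<in> T. R B}"
proof -
  have "{(A,B). A \<in> S \<and> B \<in> T \<and> Q (comb m2 A B)} = {(A,B). A \<in> S \<and> B \<in> T \<and> P A \<and> R B}"
    using assms by auto
  then show ?thesis using card_prod by simp
qed

lemma RF:
  assumes n: "2 \<le> n" and j: "1 \<le> j"
  shows "FF n j = (\<Sum>m2 = 1..n-1. FF (n - m2) j * GG m2 (j - 1))"
  unfolding FF_def GG_def card_dec[OF n]
proof (rule sum.cong)
  fix m2 assume m2: "m2 \<in> {1..n-1}"
  have m1: "1 \<le> n - m2" and m2': "1 \<le> m2" using m2 by auto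
  show "card {(A,B). A \<in> TT (n - m2) \<and> B \<in> TT m2 \<and> ff (comb m2 A B) < j} =
        card {X \<in> TT (n - m2). ff X < j} * card {X \<in> TT m2. gg X < j - 1}"
  proof (rule card_split, intro ballI)
    fix A B assume A: "A \<in> TT (n - m2)" and B: "B \<in> TT m2"
    show "ff (comb m2 A B) < j \<longleftrightarrow> ff A < j \<and> gg B < j - 1"
      using R1[OF A B m1 m2'] j by auto
  qed
qed simp

lemma RG:
  assumes n: "2 \<le> n"
  shows "GG n j = (\<Sum>m2 = 1..n-1. GA (n - m2) j * GG m2 j)"
  unfolding GA_def GG_def card_dec[OF n]
proof (rule sum.cong)
  fix m2 assume m2: "m2 \<in> {1..n-1}"
  have m1: "1 \<le> n - m2" and m2': "1 \<le> m2" using m2 by auto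
  show "card {(A,B). A \<in> TT (n - m2) \<and> B \<in> TT m2 \<and> gg (comb m2 A B) < j} =
        card {X \<in> TT (n - m2). g1 X < j} * card {X \<in> TT m2. gg X < j}"
  proof (rule card_split, intro ballI)
    fix A B assume A: "A \<in> TT (n - m2)" and B: "B \<in> TT m2"
    show "gg (comb m2 A B) < j \<longleftrightarrow> g1 A < j \<and> gg B < j"
      using R2[OF A B m1 m2'] by auto
  qed
qed simp

lemma card_TT1: "card {X \<in> TT 1. P X} = (if P [1] then 1 else 0)"
proof -
  have "{X \<in> TT 1. P X} = (if P [1] then {[1]} else {})" using TT1_eq by auto
  then show ?thesis by simp
qed

lemma GA_ge4:
  assumes m: "1 \<le> m" and j: "4 \<le> j"
  shows "GA m j = FF m (j - 1)"
proof -
  have "{X \<in> TT m. g1 X < j} = {X \<in> TT m. ff X < j - 1}"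
  proof (rule Collect_cong, rule conj_cong)
    fix X assume X: "X \<in> TT m"
    have "g1 X = Suc (ff X) \<or> (g1 X \<le> 2 \<and> ff X \<le> 2)" using claims[OF X m] by blast
    then show "g1 X < j \<longleftrightarrow> ff X < j - 1" using j by auto
  qed simp
  then show ?thesis unfolding GA_def FF_def by simp
qed

lemma GA_2:
  assumes m: "1 \<le> m"
  shows "GA m 2 = (if m = 1 then 1 else 0)"
proof (cases "m = 1")
  case True
  then show ?thesis unfolding GA_def using card_TT1[of "\<lambda>X. g1 X < 2"] stats_one by simp
next
  case False
  then have m2: "2 \<le> m" using m by simp
  have e: "{X \<in> TT m. g1 X < 2} = {}" using claims m2 by fastforce
  show ?thesis unfolding GA_def e using False by simp
qed

lemma GA_3:
  assumes m: "1 \<le> m"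
  shows "GA m 3 = 1"
  using m
proof (induction m rule: less_induct)
  case (less m)
  show ?case
  proof (cases "m = 1")
    case True
    then show ?thesis unfolding GA_def using card_TT1[of "\<lambda>X. g1 X < 3"] stats_one by simp
  next
    case False
    then have n: "2 \<le> m" using less.prems by simp
    have "GA m 3 = (\<Sum>m2 = 1..m-1. card {(A,B). A \<in> TT (m - m2) \<and> B \<in> TT m2 \<and> g1 (comb m2 A B) < 3})"
      unfolding GA_def by (rule card_dec[OF n])
    also have "\<dots> = (\<Sum>m2 = 1..m-1. if m2 = 1 then 1 else 0)"
    proof (rule sum.cong)
      fix m2 assume m2: "m2 \<in> {1..m-1}"
      have m1: "1 \<le> m - m2" and m2': "1 \<le> m2" using m2 by auto
      show "card {(A,B). A \<in> TT (m - m2) \<and> B \<in> TT m2 \<and> g1 (comb m2 A B) < 3} = (if m2 = 1 then 1 else 0)"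
      proof (cases "m2 = 1")
        case True
        have "card {(A,B). A \<in> TT (m - m2) \<and> B \<in> TT m2 \<and> g1 (comb m2 A B) < 3} =
              card {A \<in> TT (m - m2). g1 A < 3} * card {B \<in> TT m2. True}"
        proof (rule card_split, intro ballI)
          fix A B assume A: "A \<in> TT (m - m2)" and B: "B \<in> TT m2"
          have B1: "B \<in> TT 1" using B True by simp
          show "g1 (comb m2 A B) < 3 \<longleftrightarrow> g1 A < 3 \<and> True"
            using R3b[OF A B1 m1] True by auto
        qed
        also have "card {A \<in> TT (m - m2). g1 A < 3} = 1"
          using less.IH[of "m - m2"] m1 m2' unfolding GA_def by simp
        also have "card {B \<in> TT m2. True} = 1" using card_TT1[of "\<lambda>_. True"] True by simp
        finally show ?thesis using True by simp
      next
        case False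
        then have m22: "2 \<le> m2" using m2' by simp
        have "card {(A,B). A \<in> TT (m - m2) \<and> B \<in> TT m2 \<and> g1 (comb m2 A B) < 3} =
              card {A \<in> TT (m - m2). False} * card {B \<in> TT m2. True}"
        proof (rule card_split, intro ballI)
          fix A B assume A: "A \<in> TT (m - m2)" and B: "B \<in> TT m2"
          have "g2 B = Suc (gg B)" "1 \<le> gg B" using claims[OF B m2'] m22 by auto
          then show "g1 (comb m2 A B) < 3 \<longleftrightarrow> False \<and> True"
            using R3a[OF A B m1 m22] by auto
        qed
        then show ?thesis using False by simp
      qed
    qed simp
    also have "\<dots> = 1" using n by (simp add: sum.delta)
    finally show ?thesis .
  qed
qed

lemma GG_2:
  assumes n: "1 \<le> n"
  shows "GG n 2 = 1"
  using n
proof (induction n rule: less_induct)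
  case (less n)
  show ?case
  proof (cases "n = 1")
    case True
    then show ?thesis unfolding GG_def using card_TT1[of "\<lambda>X. gg X < 2"] stats_one by simp
  next
    case False
    then have n2: "2 \<le> n" using less.prems by simp
    have "GG n 2 = (\<Sum>m2 = 1..n-1. GA (n - m2) 2 * GG m2 2)" by (rule RG[OF n2])
    also have "\<dots> = (\<Sum>m2 = 1..n-1. if m2 = n - 1 then 1 else 0)"
    proof (rule sum.cong)
      fix m2 assume m2: "m2 \<in> {1..n-1}"
      have "m2 < n" "1 \<le> m2" using m2 n2 by auto
      then have "GG m2 2 = 1" using less.IH[of m2] by simp
      moreover have m1: "1 \<le> n - m2" using m2 by auto
      moreover have "GA (n - m2) 2 = (if n - m2 = 1 then 1 else 0)" using GA_2[OF m1] .
      moreover have "(n - m2 = 1) = (m2 = n - 1)" using m2 by auto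
      ultimately show "GA (n - m2) 2 * GG m2 2 = (if m2 = n - 1 then 1 else 0)" by simp
    qed simp
    also have "\<dots> = 1" using n2 by (simp add: sum.delta)
    finally show ?thesis .
  qed
qed

lemma sum_rev1:
  fixes f :: "nat \<Rightarrow> nat"
  assumes that: "1 \<le> n"
  shows "(\<Sum>m2 = 1..n-1. f (n - m2)) = (\<Sum>i = 1..n-1. f i)"
proof -
  have "(\<Sum>i = 1..n-1. f i) = (\<Sum>i = 1..n-1. f (n - 1 + 1 - i))" by (rule sum.atLeastAtMost_rev)
  also have "\<dots> = (\<Sum>i = 1..n-1. f (n - i))" using that by simp
  finally show ?thesis by simp
qed

lemma FF_1: "FF 1 j = (if 1 < j then 1 else 0)"
  unfolding FF_def using card_TT1[of "\<lambda>X. ff X < j"] stats_one by simp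

lemma GG_1: "GG 1 j = (if 1 < j then 1 else 0)"
  unfolding GG_def using card_TT1[of "\<lambda>X. gg X < j"] stats_one by simp

lemma FF3_rec: "2 \<le> n \<Longrightarrow> FF n 3 = (\<Sum>i = 1..n-1. FF i 3)"
proof -
  assume n: "2 \<le> n"
  have "FF n 3 = (\<Sum>m2 = 1..n-1. FF (n - m2) 3 * GG m2 (3 - 1))" by (rule RF[OF n]) simp
  also have "\<dots> = (\<Sum>m2 = 1..n-1. FF (n - m2) 3)"
  proof (rule sum.cong)
    fix m2 assume "m2 \<in> {1..n-1}"
    then have "GG m2 2 = 1" by (intro GG_2) simp
    then show "FF (n - m2) 3 * GG m2 (3 - 1) = FF (n - m2) 3" by simp
  qed simp
  also have "\<dots> = (\<Sum>i = 1..n-1. FF i 3)" using n by (intro sum_rev1) simp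
  finally show ?thesis .
qed

lemma GG3_rec: "2 \<le> n \<Longrightarrow> GG n 3 = (\<Sum>i = 1..n-1. GG i 3)"
proof -
  assume n: "2 \<le> n"
  have "GG n 3 = (\<Sum>m2 = 1..n-1. GA (n - m2) 3 * GG m2 3)" by (rule RG[OF n])
  also have "\<dots> = (\<Sum>m2 = 1..n-1. GG m2 3)"
    by (rule sum.cong) (auto simp: GA_3)
  finally show ?thesis .
qed

lemma FG3: "1 \<le> n \<Longrightarrow> FF n 3 = GG n 3"
proof (induction n rule: less_induct)
  case (less n)
  show ?case
  proof (cases "n = 1")
    case True then show ?thesis using FF_1[of 3] GG_1[of 3] by simp
  next
    case False
    then have n: "2 \<le> n" using less.prems by simp
    have "FF n 3 = (\<Sum>i = 1..n-1. FF i 3)" by (rule FF3_rec[OF n])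
    also have "\<dots> = (\<Sum>i = 1..n-1. GG i 3)" using less.IH by (intro sum.cong) auto
    also have "\<dots> = GG n 3" by (rule GG3_rec[OF n, symmetric])
    finally show ?thesis .
  qed
qed

lemma FF3_pow: "2 \<le> n \<Longrightarrow> FF n 3 = 2 ^ (n - 2)"
proof (induction n rule: nat_induct_at_least)
  case base
  then show ?case using FF3_rec[of 2] FF_1[of 3] by simp
next
  case (Suc n)
  have "FF (Suc n) 3 = (\<Sum>i = 1..n. FF i 3)" using FF3_rec[of "Suc n"] Suc.hyps by simp
  also have "\<dots> = (\<Sum>i = 1..n-1. FF i 3) + FF n 3"
  proof -
    have "{1..n} = insert n {1..n-1}" using Suc.hyps by auto
    moreover have "n \<notin> {1..n-1}" using Suc.hyps by auto
    ultimately show ?thesis by (simp add: add.commute)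
  qed
  also have "(\<Sum>i = 1..n-1. FF i 3) = FF n 3" using FF3_rec[OF Suc.hyps] by simp
  finally have "FF (Suc n) 3 = 2 ^ (n - 2) + 2 ^ (n - 2)" using Suc.IH by simp
  moreover have "Suc n - 2 = Suc (n - 2)" using Suc.hyps by simp
  ultimately show ?case by simp
qed

lemma FGj: "3 \<le> j \<Longrightarrow> 1 \<le> n \<Longrightarrow> FF n j = GG n j"
proof (induction n arbitrary: j rule: less_induct)
  case (less n)
  show ?case
  proof (cases "n = 1")
    case True then show ?thesis using less.prems FF_1[of j] GG_1[of j] by simp
  next
    case False
    then have n: "2 \<le> n" using less.prems by simp
    show ?thesis
    proof (cases "j = 3")
      case True then show ?thesis using FG3 less.prems by simp
    next
      case False
      then have j: "4 \<le> j" using less.prems by simp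
      have "GG n j = (\<Sum>m2 = 1..n-1. GA (n - m2) j * GG m2 j)" by (rule RG[OF n])
      also have "\<dots> = (\<Sum>m2 = 1..n-1. GG (n - m2) (j - 1) * FF m2 j)"
      proof (rule sum.cong)
        fix m2 assume m2: "m2 \<in> {1..n-1}"
        have m1: "1 \<le> n - m2" using m2 by auto
        have lt: "n - m2 < n" "3 \<le> j - 1" "m2 < n" "3 \<le> j" "1 \<le> m2" using m2 j by auto
        have "GA (n - m2) j = FF (n - m2) (j - 1)" using GA_ge4[OF m1 j] .
        also have "\<dots> = GG (n - m2) (j - 1)" using less.IH[OF lt(1) lt(2) m1] .
        finally show "GA (n - m2) j * GG m2 j = GG (n - m2) (j - 1) * FF m2 j"
          using less.IH[OF lt(3) lt(4) lt(5)] by simp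
      qed simp
      also have "\<dots> = (\<Sum>m2 = 1..n-1. FF (n - m2) j * GG m2 (j - 1))"
      proof -
        have "(\<Sum>m2 = 1..n-1. GG (n - m2) (j - 1) * FF m2 j) =
              (\<Sum>m2 = 1..n-1. (\<lambda>i. GG i (j - 1) * FF (n - i) j) (n - m2))"
          by (rule sum.cong) (auto)
        also have "\<dots> = (\<Sum>i = 1..n-1. GG i (j - 1) * FF (n - i) j)" using n by (intro sum_rev1) simp
        finally show ?thesis by (simp add: mult.commute)
      qed
      also have "\<dots> = FF n j" using RF[OF n] j by simp
      finally show ?thesis by simp
    qed
  qed
qed

lemma avoids213_iff: "avoids xs [2,1,3] \<longleftrightarrow> av213 xs"
  unfolding avoids_def c213_iff av213_def ..

lemma avoids_delta_iff: "avoids xs (delta k) \<longleftrightarrow> ld xs < k"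
  by (simp add: avoids_def delta_iff not_le)

lemma cf_len: "length (cycle_form n p) = n"
  unfolding cycle_form_def by simp

lemma one_line_ol:
  assumes cp: "cyclic_perm n p" and n: "1 \<le> n"
  shows "one_line n p = ol (cycle_form n p)"
proof -
  have "ol (cycle_form n p) = map (nxt (cycle_form n p)) [1..<Suc n]" unfolding ol_def cf_len ..
  also have "\<dots> = map p [1..<Suc n]"
  proof (rule map_cong)
    fix x assume "x \<in> set [1..<Suc n]"
    then have "x \<in> {1..n}" by auto
    then show "nxt (cycle_form n p) x = p x" using cycle_form_props(4)[OF cp n] by simp
  qed simp
  finally show ?thesis unfolding one_line_def by simp
qed

lemma a213_FF:
  assumes n: "1 \<le> n"
  shows "a213 n k = FF n k"
proof -
  define P where "P = {p. cyclic_perm n p \<and> avoids (one_line n p) (delta k) \<and> avoids (cycle_form n p) [2,1,3]}"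
  define S where "S = {X \<in> TT n. ff X < k}"
  have inP: "cycle_form n p \<in> S" if p: "p \<in> P" for p
  proof -
    have cp: "cyclic_perm n p" using p unfolding P_def by simp
    note CF = cycle_form_props[OF cp n]
    have "av213 (cycle_form n p)" using p unfolding P_def avoids213_iff by simp
    then have "cycle_form n p \<in> TT n" unfolding TT_def using CF by simp
    moreover have "ff (cycle_form n p) < k"
      using p one_line_ol[OF cp n] unfolding P_def ff_def avoids_delta_iff by simp
    ultimately show ?thesis unfolding S_def by simp
  qed
  have inj: "inj_on (cycle_form n) P"
  proof (rule inj_onI)
    fix p q assume p: "p \<in> P" and q: "q \<in> P" and e: "cycle_form n p = cycle_form n q"
    have cp: "cyclic_perm n p" and cq: "cyclic_perm n q" using p q unfolding P_def by auto
    have pp: "p permutes {1..n}" and qq: "q permutes {1..n}" using cp cq unfolding cyclic_perm_def by auto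
    show "p = q"
    proof
      fix x
      show "p x = q x"
      proof (cases "x \<in> {1..n}")
        case True
        then show ?thesis using cycle_form_props(4)[OF cp n] cycle_form_props(4)[OF cq n] e by simp
      next
        case False
        then show ?thesis using pp qq unfolding permutes_def by simp
      qed
    qed
  qed
  have img: "cycle_form n ` P = S"
  proof
    show "cycle_form n ` P \<subseteq> S" using inP by blast
    show "S \<subseteq> cycle_form n ` P"
    proof
      fix X assume X: "X \<in> S"
      then have XT: "X \<in> TT n" and fk: "ff X < k" unfolding S_def by auto
      have cp: "cyclic_perm n (nxt X)" and cf: "cycle_form n (nxt X) = X"
        using nxt_cycle_form[OF XT n] by auto
      have "one_line n (nxt X) = ol X" using one_line_ol[OF cp n] cf by simp
      moreover have "av213 X" using XT unfolding TT_def by simp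
      ultimately have "nxt X \<in> P" unfolding P_def avoids213_iff avoids_delta_iff using cp cf fk
        by (simp add: ff_def)
      then show "X \<in> cycle_form n ` P" using cf by force
    qed
  qed
  have "a213 n k = card P" unfolding a213_def P_def by simp
  also have "\<dots> = card (cycle_form n ` P)" using card_image[OF inj] by simp
  also have "\<dots> = FF n k" unfolding img S_def FF_def ..
  finally show ?thesis .
qed

lemma FF_small:
  assumes n: "2 \<le> n" and k: "k \<le> 2"
  shows "FF n k = 0"
proof -
  have n1: "1 \<le> n" using n by simp
  have e: "{X \<in> TT n. ff X < k} = {}" using claims[OF _ n1] n k by fastforce
  show ?thesis unfolding FF_def e by simp
qed

theorem theorem2p1:
  shows "(\<forall>n k. 2 \<le> n \<and> 4 \<le> k \<longrightarrow>
            a213 n k = (\<Sum>i = 1..n-1. a213 i k * a213 (n - i) (k - 1)))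
         \<and> a213 1 1 = 0
         \<and> (\<forall>k. 2 \<le> k \<longrightarrow> a213 1 k = 1)
         \<and> (\<forall>n. 2 \<le> n \<longrightarrow> a213 n 1 = 0 \<and> a213 n 2 = 0)
         \<and> (\<forall>n. 2 \<le> n \<longrightarrow> a213 n 3 = 2 ^ (n - 2))"
proof (intro conjI allI impI)
  fix n k :: nat assume nk: "2 \<le> n \<and> 4 \<le> k"
  then have n: "2 \<le> n" and k: "4 \<le> k" by auto
  have "a213 n k = FF n k" using a213_FF n by simp
  also have "\<dots> = (\<Sum>m2 = 1..n-1. FF (n - m2) k * GG m2 (k - 1))" using RF[OF n] k by simp
  also have "\<dots> = (\<Sum>m2 = 1..n-1. (\<lambda>i. FF i k * FF (n - i) (k - 1)) (n - m2))"
  proof (rule sum.cong)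
    fix m2 assume m2: "m2 \<in> {1..n-1}"
    have "GG m2 (k - 1) = FF m2 (k - 1)" using FGj[of "k - 1" m2] m2 k by simp
    moreover have "n - (n - m2) = m2" using m2 by auto
    ultimately show "FF (n - m2) k * GG m2 (k - 1) = (\<lambda>i. FF i k * FF (n - i) (k - 1)) (n - m2)" by simp
  qed simp
  also have "\<dots> = (\<Sum>i = 1..n-1. FF i k * FF (n - i) (k - 1))" using n by (intro sum_rev1) simp
  also have "\<dots> = (\<Sum>i = 1..n-1. a213 i k * a213 (n - i) (k - 1))"
  proof (rule sum.cong)
    fix i assume i: "i \<in> {1..n-1}"
    have "1 \<le> i" "1 \<le> n - i" using i by auto
    then show "FF i k * FF (n - i) (k - 1) = a213 i k * a213 (n - i) (k - 1)" using a213_FF by simp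
  qed simp
  finally show "a213 n k = (\<Sum>i = 1..n-1. a213 i k * a213 (n - i) (k - 1))" .
next
  show "a213 1 1 = 0" using a213_FF[of 1 1] FF_1[of 1] by simp
next
  fix k :: nat assume "2 \<le> k"
  then show "a213 1 k = 1" using a213_FF[of 1 k] FF_1[of k] by simp
next
  fix n :: nat assume n: "2 \<le> n"
  show "a213 n 1 = 0" using a213_FF[of n 1] FF_small[OF n, of 1] n by simp
next
  fix n :: nat assume n: "2 \<le> n"
  show "a213 n 2 = 0" using a213_FF[of n 2] FF_small[OF n, of 2] n by simp
next
  fix n :: nat assume n: "2 \<le> n"
  show "a213 n 3 = 2 ^ (n - 2)" using a213_FF[of n 3] FF3_pow[OF n] n by simp
qed

end
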